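(* Let $U$ be a state preparation unitary for $\ket\psi\bra\psi$, $\ket\psi\in\mathbb{C}^d$. Then reality testing can be solved with success probability at least $2/3$ using $2$ queries to $U$ and $2$ queries to $U^*$ (the entrywise complex conjugate of $U$). More generally, for every $\varepsilon>0$, using $O(1/\varepsilon^2)$ queries to $U$ and $U^*$ one can output an estimate of $\mathrm{real}(\ket\psi)$ with additive error at most $\varepsilon$ with probability at least $2/3$.
   Context: $\mathrm{real}(\ket\psi)=|\langle\psi^*|\psi\rangle|^2=\big|\sum_{i=1}^d\psi_i^2\big|^2$. Reality testing: decide with success probability at least $2/3$ whether $\mathrm{real}(\ket\psi)=1$ or $\mathrm{real}(\ket\psi)<1/10$, promised one holds. A unitary $U\in(\mathbb{C}^{\hat d\times\hat d})_{\mathsf A}\otimes(\mathbb{C}^{d\times d})_{\mathsf B}$ is a state preparation unitary for $\rho$ if $\mathrm{tr}_{\mathsf A}(U\ket0\bra0_{\mathsf{AB}}U^\dagger)=\rho_{\mathsf B}$. *)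

theory Defs
  imports Complex_Main "Jordan_Normal_Form.Matrix"
begin

text \<open>Tensor products use the index convention: index of a basis vector |a>|b> of C^m (x) C^n is a*n+b
(first factor = register A / query register).\<close>

definition cmat_adj :: "complex mat \<Rightarrow> complex mat" where
  "cmat_adj M = transpose_mat (map_mat cnj M)"

definition cmat_conj :: "complex mat \<Rightarrow> complex mat" where
  "cmat_conj M = map_mat cnj M"

definition unitary_mat :: "nat \<Rightarrow> complex mat \<Rightarrow> bool" where
  "unitary_mat n M \<longleftrightarrow> M \<in> carrier_mat n n \<and> M * cmat_adj M = 1\<^sub>m n"

definition kron :: "complex mat \<Rightarrow> complex mat \<Rightarrow> complex mat" where
  "kron A B = mat (dim_row A * dim_row B) (dim_col A * dim_col B)
     (\<lambda>(i,j). A $$ (i div dim_row B, j div dim_col B) * B $$ (i mod dim_row B, j mod dim_col B))"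

definition outer :: "complex vec \<Rightarrow> complex mat" where
  "outer v = mat (dim_vec v) (dim_vec v) (\<lambda>(i,j). v $ i * cnj (v $ j))"

definition ptrace_A :: "nat \<Rightarrow> nat \<Rightarrow> complex mat \<Rightarrow> complex mat" where
  "ptrace_A dA d \<rho> = mat d d (\<lambda>(i,j). \<Sum>a<dA. \<rho> $$ (a*d+i, a*d+j))"

definition state_prep :: "nat \<Rightarrow> nat \<Rightarrow> complex mat \<Rightarrow> complex mat \<Rightarrow> bool" where
  "state_prep dA d U \<rho> \<longleftrightarrow> unitary_mat (dA*d) U \<and>
     ptrace_A dA d (outer (U *\<^sub>v unit_vec (dA*d) 0)) = \<rho>"

definition is_unit_vec :: "nat \<Rightarrow> complex vec \<Rightarrow> bool" where
  "is_unit_vec d v \<longleftrightarrow> v \<in> carrier_vec d \<and> (\<Sum>i<d. (cmod (v $ i))\<^sup>2) = 1"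

definition realness :: "complex vec \<Rightarrow> real" where
  "realness v = (cmod (\<Sum>i<dim_vec v. (v $ i)\<^sup>2))\<^sup>2"

text \<open>The work space is C^(dA*d) (x) C^K (query register first,
ancilla of dimension K chosen by the algorithm).  Starting from |0>, a sequence of steps is applied:
a fixed unitary gate on the whole space (independent of the oracle), a query to U (U (x) I_K),
or a query to U^* (U^* (x) I_K).  Finally the computational basis is measured and the outcome is
post-processed classically.\<close>
datatype step = Gate "complex mat" | QueryU | QueryUconj

definition apply_step :: "nat \<Rightarrow> complex mat \<Rightarrow> step \<Rightarrow> complex vec \<Rightarrow> complex vec" where
  "apply_step K U s v = (case s of
      Gate G \<Rightarrow> G *\<^sub>v v
    | QueryU \<Rightarrow> kron U (1\<^sub>m K) *\<^sub>v v
    | QueryUconj \<Rightarrow> kron (cmat_conj U) (1\<^sub>m K) *\<^sub>v v)"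

definition final_state :: "nat \<Rightarrow> complex mat \<Rightarrow> step list \<Rightarrow> complex vec" where
  "final_state K U steps = fold (apply_step K U) steps (unit_vec (dim_row U * K) 0)"

definition valid_alg :: "nat \<Rightarrow> nat \<Rightarrow> nat \<Rightarrow> step list \<Rightarrow> bool" where
  "valid_alg dA d K steps \<longleftrightarrow> (\<forall>G. Gate G \<in> set steps \<longrightarrow> unitary_mat (dA*d*K) G)"

definition num_U_queries :: "step list \<Rightarrow> nat" where
  "num_U_queries steps = length (filter (\<lambda>s. s = QueryU) steps)"

definition num_Uconj_queries :: "step list \<Rightarrow> nat" where
  "num_Uconj_queries steps = length (filter (\<lambda>s. s = QueryUconj) steps)"

definition prob_outcome :: "complex vec \<Rightarrow> (nat \<Rightarrow> bool) \<Rightarrow> real" where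
  "prob_outcome v P = (\<Sum>x<dim_vec v. if P x then (cmod (v $ x))\<^sup>2 else 0)"

end

theory Submission
  imports Defs
begin


lemma sum_split:
  fixes f :: "nat \<Rightarrow> 'a::comm_monoid_add"
  shows "(\<Sum>j<n*m. f j) = (\<Sum>a<n. \<Sum>b<m. f (a*m+b))"
proof -
  have "(\<Sum>j<n*m. f j) = (\<Sum>a<n. sum f {a*m..<a*m+m})"
    by (rule sum.nat_group[symmetric])
  also have "\<dots> = (\<Sum>a<n. \<Sum>b<m. f (a*m+b))"
  proof (rule sum.cong[OF refl])
    fix a
    show "sum f {a*m..<a*m+m} = (\<Sum>b<m. f (a*m+b))"
      using sum.shift_bounds_nat_ivl[of f 0 "a*m" m] by (simp add: lessThan_atLeast0 add.commute)
  qed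
  finally show ?thesis .
qed

lemma divmod_eq:
  fixes a b m :: nat assumes "b < m" shows "(a*m+b) div m = a" "(a*m+b) mod m = b"
  using assms by auto

lemma mat_vec_entry: "i < dim_row A \<Longrightarrow> dim_vec v = dim_col A \<Longrightarrow>
   (A *\<^sub>v v) $ i = (\<Sum>j<dim_col A. A $$ (i,j) * v $ j)"
  by (simp add: scalar_prod_def lessThan_atLeast0)

lemma mat_mat_entry: "i < dim_row A \<Longrightarrow> j < dim_col B \<Longrightarrow> dim_col A = dim_row B \<Longrightarrow>
   (A * B) $$ (i,j) = (\<Sum>k<dim_col A. A $$ (i,k) * B $$ (k,j))"
  by (simp add: scalar_prod_def lessThan_atLeast0)



definition vkron :: "complex vec \<Rightarrow> complex vec \<Rightarrow> complex vec" where
  "vkron v w = vec (dim_vec v * dim_vec w) (\<lambda>i. v $ (i div dim_vec w) * w $ (i mod dim_vec w))"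

lemma kron_entry: "i < dim_row A * dim_row B \<Longrightarrow> j < dim_col A * dim_col B \<Longrightarrow>
  kron A B $$ (i,j) = A $$ (i div dim_row B, j div dim_col B) * B $$ (i mod dim_row B, j mod dim_col B)"
  unfolding kron_def by simp

lemma kron_dims[simp]: "dim_row (kron A B) = dim_row A * dim_row B" "dim_col (kron A B) = dim_col A * dim_col B"
  unfolding kron_def by simp_all

lemma lt_mult_div: "(i::nat) < n * m \<Longrightarrow> i div m < n"
  by (simp add: less_mult_imp_div_less)

lemma idx_lt: "a < n \<Longrightarrow> b < m \<Longrightarrow> a*m+b < n*(m::nat)"
proof -
  assume a: "a < n" and b: "b < m"
  have "a*m+b < a*m+m" using b by simp
  also have "\<dots> = Suc a * m" by simp
  also have "\<dots> \<le> n*m" using a by (intro mult_le_mono1) simp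
  finally show ?thesis .
qed

lemma kron_id_mult:
  assumes G: "G \<in> carrier_mat n n" and v: "dim_vec v = n" and w: "dim_vec w = m"
  shows "kron G (1\<^sub>m m) *\<^sub>v vkron v w = vkron (G *\<^sub>v v) w"
proof (rule eq_vecI)
  show "dim_vec (kron G (1\<^sub>m m) *\<^sub>v vkron v w) = dim_vec (vkron (G *\<^sub>v v) w)"
    using G w by (simp add: vkron_def)
  fix i assume "i < dim_vec (vkron (G *\<^sub>v v) w)"
  hence i: "i < n * m" using G w by (simp add: vkron_def)
  hence m0: "m > 0" by (cases m) auto
  have im: "i mod m < m" using m0 by simp
  have idn: "i div m < n" using i lt_mult_div by blast
  have "(kron G (1\<^sub>m m) *\<^sub>v vkron v w) $ i = (\<Sum>j<n*m. kron G (1\<^sub>m m) $$ (i,j) * vkron v w $ j)"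
    using G i v w by (subst mat_vec_entry) (auto simp: vkron_def)
  also have "\<dots> = (\<Sum>a<n. \<Sum>b<m. kron G (1\<^sub>m m) $$ (i,a*m+b) * vkron v w $ (a*m+b))"
    by (rule sum_split)
  also have "\<dots> = (\<Sum>a<n. \<Sum>b<m. (if b = i mod m then G $$ (i div m, a) * v $ a * w $ (i mod m) else 0))"
  proof (intro sum.cong refl)
    fix a b assume a: "a \<in> {..<n}" and b: "b \<in> {..<m}"
    have ab: "a*m+b < n*m" using a b
using idx_lt by auto
    show "kron G (1\<^sub>m m) $$ (i,a*m+b) * vkron v w $ (a*m+b) =
          (if b = i mod m then G $$ (i div m, a) * v $ a * w $ (i mod m) else 0)"
      using a b ab i G v w im by (auto simp: kron_entry vkron_def)
  qed
  also have "\<dots> = (\<Sum>a<n. G $$ (i div m, a) * v $ a * w $ (i mod m))"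
    using im by (simp add: sum.delta')
  also have "\<dots> = (G *\<^sub>v v) $ (i div m) * w $ (i mod m)"
  proof -
    have "(G *\<^sub>v v) $ (i div m) = (\<Sum>a<n. G $$ (i div m, a) * v $ a)"
      using mat_vec_entry[of "i div m" G v] G v idn by auto
    thus ?thesis by (simp add: sum_distrib_right)
  qed
  also have "\<dots> = vkron (G *\<^sub>v v) w $ i"
    using G w i by (simp add: vkron_def)
  finally show "(kron G (1\<^sub>m m) *\<^sub>v vkron v w) $ i = vkron (G *\<^sub>v v) w $ i" .
qed

lemma mod_mult_eq_iff:
  fixes i j K P :: nat
  shows "(i mod (K*P) = j mod (K*P)) \<longleftrightarrow> (i div P mod K = j div P mod K \<and> i mod P = j mod P)"
proof -
  have e: "x mod (P*K) = P * (x div P mod K) + x mod P" for x :: nat by (rule mod_mult2_eq)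
  show ?thesis
  proof (cases "P = 0")
    case True thus ?thesis by simp
  next
    case False
    show ?thesis
    proof
      assume h: "i mod (K*P) = j mod (K*P)"
      hence h2: "P * (i div P mod K) + i mod P = P * (j div P mod K) + j mod P"
        using e[of i] e[of j] by (simp add: mult.commute)
      have "(P * (i div P mod K) + i mod P) mod P = i mod P" by simp
      moreover have "(P * (j div P mod K) + j mod P) mod P = j mod P" by simp
      ultimately have m: "i mod P = j mod P" using h2 by metis
      hence "P * (i div P mod K) = P * (j div P mod K)" using h2 by simp
      thus "i div P mod K = j div P mod K \<and> i mod P = j mod P" using m False by simp
    next
      assume "i div P mod K = j div P mod K \<and> i mod P = j mod P"
      thus "i mod (K*P) = j mod (K*P)" using e[of i] e[of j] by (simp add: mult.commute)
    qed
  qed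
qed

lemma kron_assoc_id:
  assumes U: "U \<in> carrier_mat D D"
  shows "kron U (1\<^sub>m (K*P)) = kron (kron U (1\<^sub>m K)) (1\<^sub>m P)"
proof (rule eq_matI)
  fix i j assume i: "i < dim_row (kron (kron U (1\<^sub>m K)) (1\<^sub>m P))" and j: "j < dim_col (kron (kron U (1\<^sub>m K)) (1\<^sub>m P))"
  hence i': "i < D*K*P" and j': "j < D*K*P" using U by auto
  hence P0: "P > 0" by (cases P) auto
  have K0: "K > 0" using i' by (cases K) auto
  have dv: "x div (K*P) = x div P div K" for x :: nat by (metis div_mult2_eq mult.commute)
  have "i div P < D*K" "j div P < D*K" using i' j' lt_mult_div by auto
  moreover have "i < D*(K*P)" "j < D*(K*P)" using i' j' by (simp_all add: mult.assoc)
  ultimately show "kron U (1\<^sub>m (K*P)) $$ (i,j) = kron (kron U (1\<^sub>m K)) (1\<^sub>m P) $$ (i,j)"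
    using U P0 K0 by (auto simp: kron_entry dv mod_mult_eq_iff)
qed (use U in \<open>auto simp: mult.assoc\<close>)

lemma adj_entry: assumes "M \<in> carrier_mat n n" "i < n" "j < n"
  shows "(M * cmat_adj M) $$ (i,j) = (\<Sum>k<n. M $$ (i,k) * cnj (M $$ (j,k)))"
proof -
  have "(M * cmat_adj M) $$ (i,j) = (\<Sum>k<n. M $$ (i,k) * cmat_adj M $$ (k,j))"
    using assms by (subst mat_mat_entry) (auto simp: cmat_adj_def)
  also have "\<dots> = (\<Sum>k<n. M $$ (i,k) * cnj (M $$ (j,k)))"
    using assms by (intro sum.cong refl) (auto simp: cmat_adj_def)
  finally show ?thesis .
qed

lemma unitary_kron_id:
  assumes G: "unitary_mat n G"
  shows "unitary_mat (n*m) (kron G (1\<^sub>m m))"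
proof -
  have Gc: "G \<in> carrier_mat n n" and GG: "G * cmat_adj G = 1\<^sub>m n" using G by (auto simp: unitary_mat_def)
  have GGe: "(\<Sum>k<n. G $$ (a,k) * cnj (G $$ (b,k))) = (if a = b then 1 else 0)" if "a < n" "b < n" for a b
  proof -
    have "(G * cmat_adj G) $$ (a,b) = (\<Sum>k<n. G $$ (a,k) * cnj (G $$ (b,k)))"
      using Gc that by (rule adj_entry)
    thus ?thesis using GG that by simp
  qed
  let ?H = "kron G (1\<^sub>m m)"
  have Hc: "?H \<in> carrier_mat (n*m) (n*m)" using Gc by auto
  have "?H * cmat_adj ?H = 1\<^sub>m (n*m)"
  proof (rule eq_matI)
    fix i j assume "i < dim_row (1\<^sub>m (n * m))" "j < dim_col (1\<^sub>m (n * m))"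
    hence i: "i < n*m" and j: "j < n*m" by auto
    hence m0: "m > 0" by (cases m) auto
    have idn: "i div m < n" "j div m < n" using i j lt_mult_div by auto
    have "(?H * cmat_adj ?H) $$ (i,j) = (\<Sum>k<n*m. ?H $$ (i,k) * cnj (?H $$ (j,k)))"
      using Hc i j by (rule adj_entry)
    also have "\<dots> = (\<Sum>a<n. \<Sum>b<m. ?H $$ (i,a*m+b) * cnj (?H $$ (j,a*m+b)))"
      by (rule sum_split)
    also have "\<dots> = (\<Sum>a<n. \<Sum>b<m. if b = i mod m then (if i mod m = j mod m then G $$ (i div m, a) * cnj (G $$ (j div m, a)) else 0) else 0)"
    proof (intro sum.cong refl)
      fix a b assume a: "a \<in> {..<n}" and b: "b \<in> {..<m}"
      have ab: "a*m+b < n*m" using a b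
  using idx_lt by auto
      show "?H $$ (i,a*m+b) * cnj (?H $$ (j,a*m+b)) = (if b = i mod m then (if i mod m = j mod m then G $$ (i div m, a) * cnj (G $$ (j div m, a)) else 0) else 0)"
        using a b ab i j Gc m0 by (auto simp: kron_entry)
    qed
    also have "\<dots> = (if i mod m = j mod m then (\<Sum>a<n. G $$ (i div m, a) * cnj (G $$ (j div m, a))) else 0)"
      using m0 by (simp add: sum.delta')
    also have "\<dots> = (if i = j then 1 else 0)"
      using GGe[OF idn] by (metis div_mult_mod_eq)
    finally show "(?H * cmat_adj ?H) $$ (i,j) = 1\<^sub>m (n*m) $$ (i,j)" using i j by simp
  qed (use Gc in \<open>auto simp: cmat_adj_def\<close>)
  thus ?thesis using Hc by (simp add: unitary_mat_def)
qed



definition gate2 :: "nat \<Rightarrow> (nat \<Rightarrow> nat) \<Rightarrow> (nat \<Rightarrow> complex) \<Rightarrow> (nat \<Rightarrow> complex) \<Rightarrow> complex mat" where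
  "gate2 n \<sigma> a b = mat n n (\<lambda>(i,j). (if j = i then a i else 0) + (if j = \<sigma> i \<and> \<sigma> i \<noteq> i then b i else 0))"

lemma gate2_carrier[simp]: "gate2 n \<sigma> a b \<in> carrier_mat n n" "dim_row (gate2 n \<sigma> a b) = n" "dim_col (gate2 n \<sigma> a b) = n"
  unfolding gate2_def by auto

lemma gate2_entry: "i < n \<Longrightarrow> j < n \<Longrightarrow> gate2 n \<sigma> a b $$ (i,j) = (if j = i then a i else 0) + (if j = \<sigma> i \<and> \<sigma> i \<noteq> i then b i else 0)"
  unfolding gate2_def by simp

lemma gate2_mult:
  assumes v: "dim_vec v = n" and i: "i < n" and si: "\<sigma> i < n"
  shows "(gate2 n \<sigma> a b *\<^sub>v v) $ i = a i * v $ i + (if \<sigma> i \<noteq> i then b i * v $ (\<sigma> i) else 0)"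
proof -
  have "(gate2 n \<sigma> a b *\<^sub>v v) $ i = (\<Sum>j<n. gate2 n \<sigma> a b $$ (i,j) * v $ j)"
    using mat_vec_entry[of i "gate2 n \<sigma> a b" v] v i by simp
  also have "\<dots> = (\<Sum>j<n. (if j = i then a i * v $ j else 0) + (if j = \<sigma> i \<and> \<sigma> i \<noteq> i then b i * v $ j else 0))"
    using i by (intro sum.cong refl) (auto simp: gate2_entry distrib_right)
  also have "\<dots> = a i * v $ i + (if \<sigma> i \<noteq> i then b i * v $ (\<sigma> i) else 0)"
    using i si by (simp add: sum.distrib sum.delta' sum.If_cases)
  finally show ?thesis .
qed

lemma gate2_unitary:
  assumes inv: "\<forall>i<n. \<sigma> i < n \<and> \<sigma> (\<sigma> i) = i"
    and fx: "\<forall>i<n. \<sigma> i = i \<longrightarrow> a i * cnj (a i) = 1"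
    and nf: "\<forall>i<n. \<sigma> i \<noteq> i \<longrightarrow> a i * cnj (a i) + b i * cnj (b i) = 1 \<and> a i * cnj (b (\<sigma> i)) + b i * cnj (a (\<sigma> i)) = 0"
  shows "unitary_mat n (gate2 n \<sigma> a b)"
proof -
  let ?G = "gate2 n \<sigma> a b"
  have "?G * cmat_adj ?G = 1\<^sub>m n"
  proof (rule eq_matI)
    fix i j assume "i < dim_row (1\<^sub>m n)" "j < dim_col (1\<^sub>m n)"
    hence i: "i < n" and j: "j < n" by auto
    have si: "\<sigma> i < n" "\<sigma> (\<sigma> i) = i" using inv i by auto
    have sj: "\<sigma> j < n" "\<sigma> (\<sigma> j) = j" using inv j by auto
    let ?f = "\<lambda>k. ?G $$ (i,k) * cnj (?G $$ (j,k))"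
    have "(?G * cmat_adj ?G) $$ (i,j) = (\<Sum>k<n. ?f k)"
      using i j by (intro adj_entry) auto
    also have "\<dots> = (\<Sum>k\<in>{i, \<sigma> i}. ?f k)"
      by (rule sum.mono_neutral_right) (use i si in \<open>auto simp: gate2_entry\<close>)
    also have "\<dots> = (if i = j then 1 else 0)"
    proof (cases "\<sigma> i = i")
      case True
      then show ?thesis using i j si sj fx
        by (auto simp: gate2_entry)
    next
      case nfix: False
      have ai: "a i * cnj (a i) + b i * cnj (b i) = 1" "a i * cnj (b (\<sigma> i)) + b i * cnj (a (\<sigma> i)) = 0"
        using nf i nfix by auto
      show ?thesis
      proof (cases "j = i")
        case True thus ?thesis using nfix i si ai by (simp add: gate2_entry)
      next
        case ji: False
        show ?thesis
        proof (cases "j = \<sigma> i")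
          case True
          thus ?thesis using nfix i si ai ji by (simp add: gate2_entry)
        next
          case False
          have "\<sigma> j \<noteq> i" using sj False by metis
          moreover have "\<sigma> j \<noteq> \<sigma> i" using sj si ji by metis
          ultimately show ?thesis using nfix False ji i j si sj by (simp add: gate2_entry)
        qed
      qed
    qed
    finally show "(?G * cmat_adj ?G) $$ (i,j) = 1\<^sub>m n $$ (i,j)" using i j by simp
  qed (auto simp: cmat_adj_def)
  thus ?thesis by (simp add: unitary_mat_def)
qed

definition perm_gate :: "nat \<Rightarrow> (nat \<Rightarrow> nat) \<Rightarrow> complex mat" where
  "perm_gate n \<sigma> = gate2 n \<sigma> (\<lambda>i. if \<sigma> i = i then 1 else 0) (\<lambda>i. 1)"

lemma perm_gate_mult:
  assumes v: "dim_vec v = n" and i: "i < n" and si: "\<sigma> i < n"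
  shows "(perm_gate n \<sigma> *\<^sub>v v) $ i = v $ (\<sigma> i)"
  using gate2_mult[of v n i \<sigma>, OF assms] by (simp add: perm_gate_def)

lemma perm_gate_unitary:
  assumes inv: "\<forall>i<n. \<sigma> i < n \<and> \<sigma> (\<sigma> i) = i"
  shows "unitary_mat n (perm_gate n \<sigma>)"
  unfolding perm_gate_def
  by (rule gate2_unitary) (use inv in auto)



locale rnd = fixes dA d K :: nat assumes dA: "dA > 0" and d: "d > 0" and K: "K > 0"
begin

abbreviation "D \<equiv> dA*d"
abbreviation "P \<equiv> 2*(dA*d)*(dA*d)"
abbreviation "N \<equiv> dA*d*(K*P)"

definition "c2 x = x mod D"
definition "c1 x = x div D mod D"
definition "cc x = x div D div D mod 2"
definition "cm x = x div D div D div 2 mod K"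
definition "cq x = x div D div D div 2 div K"
definition "mk q m c p1 p2 = (((q*K + m)*2 + c)*D + p1)*D + p2"

lemma D0: "D > 0" using dA d by simp

lemma mk_comps: "mk (cq x) (cm x) (cc x) (c1 x) (c2 x) = x"
  unfolding mk_def cq_def cm_def cc_def c1_def c2_def by (simp only: div_mult_mod_eq)

lemma comps_mk:
  assumes "m < K" "c < 2" "p1 < D" "p2 < D"
  shows "cq (mk q m c p1 p2) = q" "cm (mk q m c p1 p2) = m" "cc (mk q m c p1 p2) = c"
        "c1 (mk q m c p1 p2) = p1" "c2 (mk q m c p1 p2) = p2"
  unfolding mk_def cq_def cm_def cc_def c1_def c2_def by (simp_all only: divmod_eq assms)

lemma N_eq: "N = (((D*K)*2)*D)*D" by (simp add: algebra_simps)

lemma mk_lt: assumes "q < D" "m < K" "c < 2" "p1 < D" "p2 < D" shows "mk q m c p1 p2 < N"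
proof -
  have "q*K+m < D*K" using assms idx_lt by blast
  hence "(q*K+m)*2+c < (D*K)*2" using assms idx_lt by blast
  hence "((q*K+m)*2+c)*D+p1 < ((D*K)*2)*D" using assms idx_lt by blast
  hence "(((q*K+m)*2+c)*D+p1)*D+p2 < (((D*K)*2)*D)*D" using assms idx_lt by blast
  thus ?thesis unfolding mk_def N_eq .
qed

lemma comps_lt: assumes "x < N"
  shows "cq x < D" "cm x < K" "cc x < 2" "c1 x < D" "c2 x < D"
proof -
  have "x div D div D div 2 div K = x div ((((D)*D)*2)*K)" by (simp add: div_mult2_eq)
  moreover have "x < D * ((((D)*D)*2)*K)" using assms by (simp add: algebra_simps)
  ultimately show "cq x < D" unfolding cq_def by (simp add: less_mult_imp_div_less)
qed (use K D0 in \<open>auto simp: cm_def cc_def c1_def c2_def\<close>)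

lemma mk_split: "mk q m c p1 p2 = q*(K*P) + mk 0 m c p1 p2"
  unfolding mk_def by (simp add: algebra_simps)

lemma mk_P: "mk q m c p1 p2 = (q*K+m)*P + ((c*D+p1)*D+p2)"
  unfolding mk_def by (simp add: algebra_simps)

lemma small_lt: assumes "c < 2" "p1 < D" "p2 < D" shows "(c*D+p1)*D+p2 < P"
proof -
  have "c*D+p1 < 2*D" using assms idx_lt by blast
  hence "(c*D+p1)*D+p2 < (2*D)*D" using assms idx_lt by blast
  thus ?thesis by simp
qed

lemma mk0_lt: assumes "m < K" "c < 2" "p1 < D" "p2 < D" shows "mk 0 m c p1 p2 < K*P"
proof -
  have "mk 0 m c p1 p2 = m*P + ((c*D+p1)*D+p2)" using mk_P by simp
  also have "\<dots> < K*P" using idx_lt[OF assms(1) small_lt[OF assms(2-4)]] .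
  finally show ?thesis .
qed

lemma x_decomp: assumes "x < N"
  shows "x div (K*P) = cq x" "x mod (K*P) = mk 0 (cm x) (cc x) (c1 x) (c2 x)"
proof -
  have lt: "mk 0 (cm x) (cc x) (c1 x) (c2 x) < K*P" using comps_lt[OF assms] by (intro mk0_lt) auto
  have "x = cq x * (K*P) + mk 0 (cm x) (cc x) (c1 x) (c2 x)"
    using mk_comps[of x] mk_split by metis
  thus "x div (K*P) = cq x" "x mod (K*P) = mk 0 (cm x) (cc x) (c1 x) (c2 x)"
    using divmod_eq[OF lt] by metis+
qed

lemma x_decompP: assumes "x < N"
  shows "x div P = cq x * K + cm x" "x mod P div D div D = cc x" "x mod P div D mod D = c1 x" "x mod P mod D = c2 x"
proof -
  have c: "cc x < 2" "c1 x < D" "c2 x < D" using comps_lt[OF assms] by auto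
  have lt: "(cc x*D+c1 x)*D+c2 x < P" using small_lt c by blast
  have "x = (cq x * K + cm x)*P + ((cc x*D+c1 x)*D+c2 x)"
    using mk_comps[of x] mk_P by metis
  hence e1: "x div P = cq x * K + cm x" and e2: "x mod P = (cc x*D+c1 x)*D+c2 x"
    using divmod_eq[OF lt] by metis+
  show "x div P = cq x * K + cm x" by (rule e1)
  show "x mod P div D div D = cc x" "x mod P div D mod D = c1 x" "x mod P mod D = c2 x"
    unfolding e2 using c by (simp_all add: divmod_eq)
qed

lemma mk_zero_iff: "mk q m c p1 p2 = 0 \<longleftrightarrow> q = 0 \<and> m = 0 \<and> c = 0 \<and> p1 = 0 \<and> p2 = 0"
  unfolding mk_def using K D0 by auto

end


context rnd begin

definition "sw1 p p' = p div d * d + p' mod d"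

lemma sw1_lt: "p < D \<Longrightarrow> sw1 p p' < D"
  unfolding sw1_def using d idx_lt[of "p div d" dA "p' mod d" d]
  by (simp add: less_mult_imp_div_less mult.commute)

lemma sw1_sw1: "sw1 (sw1 p p') (sw1 p' p) = p"
  unfolding sw1_def using d by (simp add: divmod_eq)

definition "\<sigma>1 x = mk (c1 x) (cm x) (cc x) (cq x) (c2 x)"
definition "\<sigma>2 x = mk (c2 x) (cm x) (cc x) (c1 x) (cq x)"
definition "\<sigma>3 x = (if cc x = 1 then mk (cq x) (cm x) 1 (sw1 (c1 x) (c2 x)) (sw1 (c2 x) (c1 x)) else x)"
definition "\<sigma>4 x = mk (cq x) (cm x) (1 - cc x) (c1 x) (c2 x)"

lemma inv1: "\<forall>x<N. \<sigma>1 x < N \<and> \<sigma>1 (\<sigma>1 x) = x"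
proof (intro allI impI conjI)
  fix x assume x: "x < N"
  note c = comps_lt[OF x]
  show "\<sigma>1 x < N" unfolding \<sigma>1_def using c by (intro mk_lt) auto
  show "\<sigma>1 (\<sigma>1 x) = x" unfolding \<sigma>1_def using c by (simp add: comps_mk mk_comps)
qed

lemma inv2: "\<forall>x<N. \<sigma>2 x < N \<and> \<sigma>2 (\<sigma>2 x) = x"
proof (intro allI impI conjI)
  fix x assume x: "x < N"
  note c = comps_lt[OF x]
  show "\<sigma>2 x < N" unfolding \<sigma>2_def using c by (intro mk_lt) auto
  show "\<sigma>2 (\<sigma>2 x) = x" unfolding \<sigma>2_def using c by (simp add: comps_mk mk_comps)
qed

lemma inv3: "\<forall>x<N. \<sigma>3 x < N \<and> \<sigma>3 (\<sigma>3 x) = x"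
proof (intro allI impI conjI)
  fix x assume x: "x < N"
  note c = comps_lt[OF x]
  have s: "sw1 (c1 x) (c2 x) < D" "sw1 (c2 x) (c1 x) < D" using c sw1_lt by auto
  show "\<sigma>3 x < N" unfolding \<sigma>3_def using c s x by (auto intro: mk_lt)
  show "\<sigma>3 (\<sigma>3 x) = x"
  proof (cases "cc x = 1")
    case True
    have "\<sigma>3 (\<sigma>3 x) = mk (cq x) (cm x) 1 (c1 x) (c2 x)"
      unfolding \<sigma>3_def using c s True by (simp add: comps_mk sw1_sw1)
    thus ?thesis using True mk_comps by metis
  next
    case False thus ?thesis unfolding \<sigma>3_def by simp
  qed
qed

lemma inv4: "\<forall>x<N. \<sigma>4 x < N \<and> \<sigma>4 (\<sigma>4 x) = x"
proof (intro allI impI conjI)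
  fix x assume x: "x < N"
  note c = comps_lt[OF x]
  show "\<sigma>4 x < N" unfolding \<sigma>4_def using c by (intro mk_lt) auto
  have "1 - (1 - cc x) = cc x" using c by auto
  thus "\<sigma>4 (\<sigma>4 x) = x" unfolding \<sigma>4_def using c by (simp add: comps_mk mk_comps)
qed

lemma cc_s4: "x < N \<Longrightarrow> cc (\<sigma>4 x) = 1 - cc x"
  unfolding \<sigma>4_def using comps_lt[of x] by (simp add: comps_mk)

lemma s4_ne: "x < N \<Longrightarrow> \<sigma>4 x \<noteq> x"
  using cc_s4[of x] comps_lt[of x] by (metis One_nat_def diff_Suc_1 diff_zero less_2_cases_iff zero_neq_one)

definition "h = complex_of_real (sqrt (1/2))"

lemma hh: "h * h = 1/2" "h * cnj h = 1/2"
proof -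
  have "sqrt (1/2) * sqrt (1/2) = (1/2::real)" by simp
  hence "h * h = complex_of_real (1/2)" unfolding h_def by (metis of_real_mult)
  thus "h * h = 1/2" by simp
  thus "h * cnj h = 1/2" unfolding h_def by simp
qed

definition "Hg = gate2 N \<sigma>4 (\<lambda>x. if cc x = 0 then h else - h) (\<lambda>x. h)"

lemma Hg_unitary: "unitary_mat N Hg"
  unfolding Hg_def
proof (rule gate2_unitary[OF inv4])
  show "\<forall>i<N. \<sigma>4 i = i \<longrightarrow> (if cc i = 0 then h else - h) * cnj (if cc i = 0 then h else - h) = 1"
    using s4_ne by auto
  show "\<forall>i<N. \<sigma>4 i \<noteq> i \<longrightarrow>
        (if cc i = 0 then h else - h) * cnj (if cc i = 0 then h else - h) + h * cnj h = 1 \<and>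
        (if cc i = 0 then h else - h) * cnj h + h * cnj (if cc (\<sigma>4 i) = 0 then h else - h) = 0"
  proof (intro allI impI conjI)
    fix i assume i: "i < N"
    have "(if cc i = 0 then h else - h) * cnj (if cc i = 0 then h else - h) = h * cnj h" by auto
    thus "(if cc i = 0 then h else - h) * cnj (if cc i = 0 then h else - h) + h * cnj h = 1"
      by (simp only: hh(2)) simp
    have "cc i < 2" using comps_lt i by auto
    thus "(if cc i = 0 then h else - h) * cnj h + h * cnj (if cc (\<sigma>4 i) = 0 then h else - h) = 0"
      using cc_s4[OF i] by (auto simp: mult.commute)
  qed
qed

lemma Hg_mult: "dim_vec v = N \<Longrightarrow> x < N \<Longrightarrow>
   (Hg *\<^sub>v v) $ x = (if cc x = 0 then h else - h) * v $ x + h * v $ (\<sigma>4 x)"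
  unfolding Hg_def using gate2_mult[of v N x \<sigma>4] inv4 s4_ne by auto

definition "round_steps = [QueryU, Gate (perm_gate N \<sigma>1), QueryUconj, Gate (perm_gate N \<sigma>2),
   Gate Hg, Gate (perm_gate N \<sigma>3), Gate Hg]"

lemma round_valid: "Gate G \<in> set round_steps \<Longrightarrow> unitary_mat N G"
  unfolding round_steps_def
  using perm_gate_unitary[OF inv1] perm_gate_unitary[OF inv2] perm_gate_unitary[OF inv3] Hg_unitary
  by auto

lemma round_counts: "num_U_queries round_steps = 1" "num_Uconj_queries round_steps = 1"
  unfolding round_steps_def num_U_queries_def num_Uconj_queries_def by simp_all

end


context rnd begin

lemma query_mult:
  assumes U': "U' \<in> carrier_mat D D" and v: "dim_vec v = N" and x: "x < N"
  shows "(kron U' (1\<^sub>m (K*P)) *\<^sub>v v) $ x = (\<Sum>q<D. U' $$ (cq x, q) * v $ (mk q (cm x) (cc x) (c1 x) (c2 x)))"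
proof -
  let ?M = "K*P"
  have KP: "?M > 0" using K D0 by simp
  have xm: "x mod ?M < ?M" using KP by simp
  have "(kron U' (1\<^sub>m ?M) *\<^sub>v v) $ x = (\<Sum>j<D*?M. kron U' (1\<^sub>m ?M) $$ (x,j) * v $ j)"
    using mat_vec_entry[of x "kron U' (1\<^sub>m ?M)" v] U' v x by simp
  also have "\<dots> = (\<Sum>a<D. \<Sum>b<?M. kron U' (1\<^sub>m ?M) $$ (x,a*?M+b) * v $ (a*?M+b))"
    by (rule sum_split)
  also have "\<dots> = (\<Sum>a<D. \<Sum>b<?M. if b = x mod ?M then U' $$ (x div ?M, a) * v $ (a*?M + x mod ?M) else 0)"
  proof (intro sum.cong refl)
    fix a b assume a: "a \<in> {..<D}" and b: "b \<in> {..<?M}"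
    have ab: "a*?M+b < D*?M" using a b idx_lt by auto
    show "kron U' (1\<^sub>m ?M) $$ (x,a*?M+b) * v $ (a*?M+b) = (if b = x mod ?M then U' $$ (x div ?M, a) * v $ (a*?M + x mod ?M) else 0)"
      using a b ab x U' KP by (auto simp: kron_entry)
  qed
  also have "\<dots> = (\<Sum>a<D. U' $$ (x div ?M, a) * v $ (a*?M + x mod ?M))"
    using xm by (simp add: sum.delta')
  also have "\<dots> = (\<Sum>q<D. U' $$ (cq x, q) * v $ (mk q (cm x) (cc x) (c1 x) (c2 x)))"
    unfolding x_decomp[OF x] by (intro sum.cong refl) (metis mk_split)
  finally show ?thesis .
qed

lemma perm_vec: assumes inv: "\<forall>x<N. \<sigma> x < N \<and> \<sigma> (\<sigma> x) = x"
  shows "perm_gate N \<sigma> *\<^sub>v vec N f = vec N (\<lambda>x. f (\<sigma> x))"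
proof (rule eq_vecI)
  fix i assume "i < dim_vec (vec N (\<lambda>x. f (\<sigma> x)))"
  hence i: "i < N" by simp
  show "(perm_gate N \<sigma> *\<^sub>v vec N f) $ i = vec N (\<lambda>x. f (\<sigma> x)) $ i"
    using perm_gate_mult[of "vec N f" N i \<sigma>] inv i by simp
qed (simp add: perm_gate_def)

lemma comps_s1: "x < N \<Longrightarrow> cq (\<sigma>1 x) = c1 x \<and> cm (\<sigma>1 x) = cm x \<and> cc (\<sigma>1 x) = cc x \<and> c1 (\<sigma>1 x) = cq x \<and> c2 (\<sigma>1 x) = c2 x"
  unfolding \<sigma>1_def using comps_lt[of x] by (simp add: comps_mk)
lemma comps_s2: "x < N \<Longrightarrow> cq (\<sigma>2 x) = c2 x \<and> cm (\<sigma>2 x) = cm x \<and> cc (\<sigma>2 x) = cc x \<and> c1 (\<sigma>2 x) = c1 x \<and> c2 (\<sigma>2 x) = cq x"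
  unfolding \<sigma>2_def using comps_lt[of x] by (simp add: comps_mk)
lemma comps_s3: "x < N \<Longrightarrow> cc x = 1 \<Longrightarrow> cq (\<sigma>3 x) = cq x \<and> cm (\<sigma>3 x) = cm x \<and> cc (\<sigma>3 x) = 1 \<and> c1 (\<sigma>3 x) = sw1 (c1 x) (c2 x) \<and> c2 (\<sigma>3 x) = sw1 (c2 x) (c1 x)"
  unfolding \<sigma>3_def using comps_lt[of x] sw1_lt by (simp add: comps_mk)
lemma comps_s4: "x < N \<Longrightarrow> cq (\<sigma>4 x) = cq x \<and> cm (\<sigma>4 x) = cm x \<and> cc (\<sigma>4 x) = 1 - cc x \<and> c1 (\<sigma>4 x) = c1 x \<and> c2 (\<sigma>4 x) = c2 x"
  unfolding \<sigma>4_def using comps_lt[of x] by (simp add: comps_mk)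

definition "\<phi> U q = U $$ (q, 0)"

definition "v1 U = vec N (\<lambda>x. \<phi> U (cq x) * (if cm x = 0 \<and> cc x = 0 \<and> c1 x = 0 \<and> c2 x = 0 then 1 else 0))"
definition "v2 U = vec N (\<lambda>x. \<phi> U (c1 x) * (if cm x = 0 \<and> cc x = 0 \<and> cq x = 0 \<and> c2 x = 0 then 1 else 0))"
definition "v3 U = vec N (\<lambda>x. cnj (\<phi> U (cq x)) * \<phi> U (c1 x) * (if cm x = 0 \<and> cc x = 0 \<and> c2 x = 0 then 1 else 0))"
definition "v4 U = vec N (\<lambda>x. cnj (\<phi> U (c2 x)) * \<phi> U (c1 x) * (if cm x = 0 \<and> cc x = 0 \<and> cq x = 0 then 1 else 0))"
definition "v5 U = vec N (\<lambda>x. h * \<phi> U (c1 x) * cnj (\<phi> U (c2 x)) * (if cq x = 0 \<and> cm x = 0 then 1 else 0))"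
definition "v6 U = vec N (\<lambda>x. h * (if cc x = 1 then \<phi> U (sw1 (c1 x) (c2 x)) * cnj (\<phi> U (sw1 (c2 x) (c1 x)))
      else \<phi> U (c1 x) * cnj (\<phi> U (c2 x))) * (if cq x = 0 \<and> cm x = 0 then 1 else 0))"

definition "tau U c p1 p2 = (1/2) * (\<phi> U p1 * cnj (\<phi> U p2) + (if c = 0 then 1 else -1) * (\<phi> U (sw1 p1 p2) * cnj (\<phi> U (sw1 p2 p1))))"
definition "v7 U = vec N (\<lambda>x. tau U (cc x) (c1 x) (c2 x) * (if cq x = 0 \<and> cm x = 0 then 1 else 0))"

lemma step1: assumes U: "U \<in> carrier_mat D D" shows "kron U (1\<^sub>m (K*P)) *\<^sub>v unit_vec N 0 = v1 U"
proof (rule eq_vecI)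
  fix x assume "x < dim_vec (v1 U)"
  hence x: "x < N" by (simp add: v1_def)
  note c = comps_lt[OF x]
  have "(kron U (1\<^sub>m (K*P)) *\<^sub>v unit_vec N 0) $ x = (\<Sum>q<D. U $$ (cq x, q) * unit_vec N 0 $ (mk q (cm x) (cc x) (c1 x) (c2 x)))"
    using query_mult[OF U _ x] by simp
  also have "\<dots> = (\<Sum>q<D. if q = 0 then U $$ (cq x, 0) * (if cm x = 0 \<and> cc x = 0 \<and> c1 x = 0 \<and> c2 x = 0 then 1 else 0) else 0)"
  proof (intro sum.cong refl)
    fix q assume "q \<in> {..<D}"
    hence "mk q (cm x) (cc x) (c1 x) (c2 x) < N" using c by (intro mk_lt) auto
    moreover have "0 < N" by (metis le0 le_less_trans x)
    ultimately show "U $$ (cq x, q) * unit_vec N 0 $ (mk q (cm x) (cc x) (c1 x) (c2 x)) = (if q = 0 then U $$ (cq x, 0) * (if cm x = 0 \<and> cc x = 0 \<and> c1 x = 0 \<and> c2 x = 0 then 1 else 0) else 0)"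
      by (auto simp: mk_zero_iff)
  qed
  also have "\<dots> = (v1 U) $ x" using D0 x dA d K by (simp add: v1_def \<phi>_def)
  finally show "(kron U (1\<^sub>m (K*P)) *\<^sub>v unit_vec N 0) $ x = (v1 U) $ x" .
qed (use U dA d K in \<open>simp add: v1_def\<close>)

lemma step2: "perm_gate N \<sigma>1 *\<^sub>v v1 U = v2 U"
  unfolding v1_def v2_def perm_vec[OF inv1]
  by (rule eq_vecI) (auto simp: comps_s1)

lemma step3: assumes U: "U \<in> carrier_mat D D" shows "kron (cmat_conj U) (1\<^sub>m (K*P)) *\<^sub>v v2 U = v3 U"
proof (rule eq_vecI)
  have U': "cmat_conj U \<in> carrier_mat D D" using U by (simp add: cmat_conj_def)
  fix x assume "x < dim_vec (v3 U)"
  hence x: "x < N" by (simp add: v3_def)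
  note c = comps_lt[OF x]
  have "(kron (cmat_conj U) (1\<^sub>m (K*P)) *\<^sub>v v2 U) $ x = (\<Sum>q<D. cmat_conj U $$ (cq x, q) * v2 U $ (mk q (cm x) (cc x) (c1 x) (c2 x)))"
    using query_mult[OF U' _ x] by (simp add: v2_def)
  also have "\<dots> = (\<Sum>q<D. if q = 0 then cnj (U $$ (cq x, 0)) * \<phi> U (c1 x) * (if cm x = 0 \<and> cc x = 0 \<and> c2 x = 0 then 1 else 0) else 0)"
  proof (intro sum.cong refl)
    fix q assume q: "q \<in> {..<D}"
    hence "mk q (cm x) (cc x) (c1 x) (c2 x) < N" using c by (intro mk_lt) auto
    thus "cmat_conj U $$ (cq x, q) * v2 U $ (mk q (cm x) (cc x) (c1 x) (c2 x)) = (if q = 0 then cnj (U $$ (cq x, 0)) * \<phi> U (c1 x) * (if cm x = 0 \<and> cc x = 0 \<and> c2 x = 0 then 1 else 0) else 0)"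
      using c q U by (auto simp: v2_def comps_mk cmat_conj_def)
  qed
  also have "\<dots> = (v3 U) $ x" using D0 x dA d K by (simp add: v3_def \<phi>_def)
  finally show "(kron (cmat_conj U) (1\<^sub>m (K*P)) *\<^sub>v v2 U) $ x = (v3 U) $ x" .
qed (use U in \<open>simp add: v3_def cmat_conj_def\<close>)

lemma step4: "perm_gate N \<sigma>2 *\<^sub>v v3 U = v4 U"
  unfolding v3_def v4_def perm_vec[OF inv2]
  by (rule eq_vecI) (auto simp: comps_s2)

lemma step5: "Hg *\<^sub>v v4 U = v5 U"
proof (rule eq_vecI)
  fix x assume "x < dim_vec (v5 U)"
  hence x: "x < N" by (simp add: v5_def)
  have c: "cc x < 2" using comps_lt[OF x] by simp
  have s: "\<sigma>4 x < N" using inv4 x by simp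
  define W where "W = \<phi> U (c1 x) * cnj (\<phi> U (c2 x))"
  define z :: complex where "z = (if cq x = 0 \<and> cm x = 0 then 1 else 0)"
  have hm: "(Hg *\<^sub>v v4 U) $ x = (if cc x = 0 then h else - h) * v4 U $ x + h * v4 U $ (\<sigma>4 x)"
    using Hg_mult[of "v4 U" x] x by (simp add: v4_def)
  have r: "v5 U $ x = h * W * z"
    using x by (simp add: v5_def W_def z_def)
  show "(Hg *\<^sub>v v4 U) $ x = v5 U $ x"
  proof (cases "cc x = 0")
    case True
    have a: "v4 U $ x = W * z" using x True by (simp add: v4_def W_def z_def conj_commute)
    have b: "v4 U $ (\<sigma>4 x) = 0" using s True comps_s4[OF x] by (simp add: v4_def)
    show ?thesis unfolding hm r a b using True by simp
  next
    case False
    hence T: "cc x = 1" using c by simp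
    have a: "v4 U $ x = 0" using x T by (simp add: v4_def)
    have b: "v4 U $ (\<sigma>4 x) = W * z" using s T comps_s4[OF x] by (simp add: v4_def W_def z_def conj_commute)
    show ?thesis unfolding hm r a b using T by simp
  qed
qed (simp add: v5_def Hg_def)

lemma step6: "perm_gate N \<sigma>3 *\<^sub>v v5 U = v6 U"
  unfolding v5_def v6_def perm_vec[OF inv3]
proof (rule eq_vecI)
  fix x assume "x < dim_vec (vec N (\<lambda>x. h * (if cc x = 1 then \<phi> U (sw1 (c1 x) (c2 x)) * cnj (\<phi> U (sw1 (c2 x) (c1 x)))
      else \<phi> U (c1 x) * cnj (\<phi> U (c2 x))) * (if cq x = 0 \<and> cm x = 0 then 1 else 0)))"
  hence x: "x < N" by simp
  show "vec N (\<lambda>x. h * \<phi> U (c1 (\<sigma>3 x)) * cnj (\<phi> U (c2 (\<sigma>3 x))) * (if cq (\<sigma>3 x) = 0 \<and> cm (\<sigma>3 x) = 0 then 1 else 0)) $ x =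
       vec N (\<lambda>x. h * (if cc x = 1 then \<phi> U (sw1 (c1 x) (c2 x)) * cnj (\<phi> U (sw1 (c2 x) (c1 x)))
      else \<phi> U (c1 x) * cnj (\<phi> U (c2 x))) * (if cq x = 0 \<and> cm x = 0 then 1 else 0)) $ x"
  proof (cases "cc x = 1")
    case True thus ?thesis using x comps_s3[OF x True] by simp
  next
    case False thus ?thesis using x by (simp add: \<sigma>3_def)
  qed
qed simp

lemma step7: "Hg *\<^sub>v v6 U = v7 U"
proof (rule eq_vecI)
  fix x assume "x < dim_vec (v7 U)"
  hence x: "x < N" by (simp add: v7_def)
  have c: "cc x < 2" using comps_lt[OF x] by simp
  have s: "\<sigma>4 x < N" using inv4 x by simp
  define W where "W = \<phi> U (c1 x) * cnj (\<phi> U (c2 x))"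
  define Ws where "Ws = \<phi> U (sw1 (c1 x) (c2 x)) * cnj (\<phi> U (sw1 (c2 x) (c1 x)))"
  define z :: complex where "z = (if cq x = 0 \<and> cm x = 0 then 1 else 0)"
  have hm: "(Hg *\<^sub>v v6 U) $ x = (if cc x = 0 then h else - h) * v6 U $ x + h * v6 U $ (\<sigma>4 x)"
    using Hg_mult[of "v6 U" x] x by (simp add: v6_def)
  have r: "v7 U $ x = (1/2) * (W + (if cc x = 0 then 1 else -1) * Ws) * z"
    using x by (simp add: v7_def tau_def W_def Ws_def z_def)
  show "(Hg *\<^sub>v v6 U) $ x = v7 U $ x"
  proof (cases "cc x = 0")
    case True
    have a: "v6 U $ x = h * W * z" using x True by (simp add: v6_def W_def z_def)
    have b: "v6 U $ (\<sigma>4 x) = h * Ws * z" using s True comps_s4[OF x] by (simp add: v6_def Ws_def z_def)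
    have "h * (h * W * z) + h * (h * Ws * z) = (h*h) * (W + Ws) * z" by (simp add: algebra_simps)
    thus ?thesis unfolding hm r a b using True by (simp add: hh)
  next
    case False
    hence T: "cc x = 1" using c by simp
    have a: "v6 U $ x = h * Ws * z" using x T by (simp add: v6_def Ws_def z_def)
    have b: "v6 U $ (\<sigma>4 x) = h * W * z" using s T comps_s4[OF x] by (simp add: v6_def W_def z_def)
    have "- h * (h * Ws * z) + h * (h * W * z) = (h*h) * (W + -1 * Ws) * z" by (simp add: algebra_simps)
    thus ?thesis unfolding hm r a b using T by (simp add: hh)
  qed
qed (simp add: v7_def Hg_def)

definition "tauv U = vec P (\<lambda>p. tau U (p div D div D) (p div D mod D) (p mod D))"

lemma v7_kron: "v7 U = vkron (unit_vec (D*K) 0) (tauv U)"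
proof (rule eq_vecI)
  have dims: "D*K*P = N" by (simp add: algebra_simps)
  show "dim_vec (v7 U) = dim_vec (vkron (unit_vec (D*K) 0) (tauv U))"
    by (simp add: v7_def vkron_def tauv_def dims)
  fix x assume "x < dim_vec (vkron (unit_vec (D*K) 0) (tauv U))"
  hence x: "x < N" by (simp add: vkron_def tauv_def dims)
  note e = x_decompP[OF x]
  have c: "cq x < D" "cm x < K" using comps_lt[OF x] by auto
  have y: "cq x * K + cm x < D*K" using idx_lt[OF c] .
  have P0: "x mod P < P" using D0 by simp
  have z: "cq x * K + cm x = 0 \<longleftrightarrow> cq x = 0 \<and> cm x = 0" using K by auto
  have "vkron (unit_vec (D*K) 0) (tauv U) $ x = unit_vec (D*K) 0 $ (x div P) * tauv U $ (x mod P)"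
    using x dims by (simp add: vkron_def tauv_def)
  also have "\<dots> = (if cq x = 0 \<and> cm x = 0 then 1 else 0) * tau U (cc x) (c1 x) (c2 x)"
    using y P0 z le_less_trans[OF le0 y] unfolding tauv_def by (simp add: e)
  also have "\<dots> = v7 U $ x" using x by (simp add: v7_def)
  finally show "v7 U $ x = vkron (unit_vec (D*K) 0) (tauv U) $ x" by simp
qed

lemma round_fold: assumes U: "U \<in> carrier_mat D D"
  shows "fold (apply_step (K*P) U) round_steps (unit_vec N 0) = vkron (unit_vec (D*K) 0) (tauv U)"
proof -
  have "fold (apply_step (K*P) U) round_steps (unit_vec N 0) = Hg *\<^sub>v (perm_gate N \<sigma>3 *\<^sub>v (Hg *\<^sub>v (perm_gate N \<sigma>2 *\<^sub>v
     (kron (cmat_conj U) (1\<^sub>m (K*P)) *\<^sub>v (perm_gate N \<sigma>1 *\<^sub>v (kron U (1\<^sub>m (K*P)) *\<^sub>v unit_vec N 0))))))"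
    unfolding round_steps_def by (simp only: fold_Cons fold_Nil comp_def id_def apply_step_def step.case)
  also have "\<dots> = v7 U"
    by (simp only: step1[OF U] step2 step3[OF U] step4 step5 step6 step7)
  finally show ?thesis using v7_kron by simp
qed

end


definition lift :: "nat \<Rightarrow> step \<Rightarrow> step" where
  "lift m s = (case s of Gate G \<Rightarrow> Gate (kron G (1\<^sub>m m)) | QueryU \<Rightarrow> QueryU | QueryUconj \<Rightarrow> QueryUconj)"

definition PP :: "nat \<Rightarrow> nat \<Rightarrow> nat" where "PP dA d = 2*(dA*d)*(dA*d)"

fun Kn :: "nat \<Rightarrow> nat \<Rightarrow> nat \<Rightarrow> nat" where
  "Kn dA d 0 = 1"
| "Kn dA d (Suc n) = Kn dA d n * PP dA d"

fun alg :: "nat \<Rightarrow> nat \<Rightarrow> nat \<Rightarrow> step list" where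
  "alg dA d 0 = []"
| "alg dA d (Suc n) = rnd.round_steps dA d (Kn dA d n) @ map (lift (PP dA d)) (alg dA d n)"

lemma Kn_pos: "dA > 0 \<Longrightarrow> d > 0 \<Longrightarrow> Kn dA d n > 0"
  by (induction n) (auto simp: PP_def)

lemma rnd_inst: "dA > 0 \<Longrightarrow> d > 0 \<Longrightarrow> rnd dA d (Kn dA d n)"
  using Kn_pos by (unfold_locales) auto

lemma counts_lift: "num_U_queries (map (lift m) xs) = num_U_queries xs" "num_Uconj_queries (map (lift m) xs) = num_Uconj_queries xs"
  by (induction xs) (auto simp: num_U_queries_def num_Uconj_queries_def lift_def split: step.splits)

lemma counts_append: "num_U_queries (xs @ ys) = num_U_queries xs + num_U_queries ys"
   "num_Uconj_queries (xs @ ys) = num_Uconj_queries xs + num_Uconj_queries ys"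
  by (simp_all add: num_U_queries_def num_Uconj_queries_def)

lemma alg_counts: assumes "dA > 0" "d > 0"
  shows "num_U_queries (alg dA d n) = n \<and> num_Uconj_queries (alg dA d n) = n"
proof (induction n)
  case 0 thus ?case by (simp add: num_U_queries_def num_Uconj_queries_def)
next
  case (Suc n)
  interpret r: rnd dA d "Kn dA d n" using rnd_inst assms .
  show ?case using Suc r.round_counts by (simp add: counts_append counts_lift)
qed

lemma alg_valid: assumes "dA > 0" "d > 0"
  shows "valid_alg dA d (Kn dA d n) (alg dA d n)"
proof (induction n)
  case 0 thus ?case by (simp add: valid_alg_def)
next
  case (Suc n)
  interpret r: rnd dA d "Kn dA d n" using rnd_inst assms .
  show ?case unfolding valid_alg_def
  proof (intro allI impI)
    fix G assume "Gate G \<in> set (alg dA d (Suc n))"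
    hence "Gate G \<in> set r.round_steps \<or> Gate G \<in> set (map (lift (PP dA d)) (alg dA d n))" by simp
    thus "unitary_mat (dA * d * Kn dA d (Suc n)) G"
    proof
      assume "Gate G \<in> set r.round_steps"
      thus ?thesis using r.round_valid by (simp add: PP_def)
    next
      assume "Gate G \<in> set (map (lift (PP dA d)) (alg dA d n))"
      then obtain s where s: "s \<in> set (alg dA d n)" "lift (PP dA d) s = Gate G" by auto
      obtain G0 where G0: "s = Gate G0" "G = kron G0 (1\<^sub>m (PP dA d))"
      proof (cases s)
        case (Gate x1) thus ?thesis using that s(2) by (simp add: lift_def)
      qed (use s(2) in \<open>simp_all add: lift_def\<close>)
      have "unitary_mat (dA*d*Kn dA d n) G0" using Suc s(1) G0(1) by (auto simp: valid_alg_def)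
      from unitary_kron_id[OF this] show ?thesis using G0 by (simp add: mult.assoc)
    qed
  qed
qed

lemma step_lift:
  assumes U: "U \<in> carrier_mat D D" and Gs: "\<And>G. s = Gate G \<Longrightarrow> unitary_mat (D*K) G"
    and v: "dim_vec v = D*K" and w: "dim_vec w = m"
  shows "apply_step (K*m) U (lift m s) (vkron v w) = vkron (apply_step K U s v) w \<and> dim_vec (apply_step K U s v) = D*K"
proof (cases s)
  case (Gate G)
  have Gc: "G \<in> carrier_mat (D*K) (D*K)" using Gs Gate by (simp add: unitary_mat_def)
  thus ?thesis using Gate kron_id_mult[OF Gc v w] by (simp add: apply_step_def lift_def)
next
  case QueryU
  have c: "kron U (1\<^sub>m K) \<in> carrier_mat (D*K) (D*K)" using U by (auto simp: kron_def)
  show ?thesis using QueryU kron_id_mult[OF c v w] kron_assoc_id[OF U, of K m] U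
    by (simp add: apply_step_def lift_def)
next
  case QueryUconj
  have U': "cmat_conj U \<in> carrier_mat D D" using U by (simp add: cmat_conj_def)
  have c: "kron (cmat_conj U) (1\<^sub>m K) \<in> carrier_mat (D*K) (D*K)" using U' by (auto simp: kron_def)
  show ?thesis using QueryUconj kron_id_mult[OF c v w] kron_assoc_id[OF U', of K m] U'
    by (simp add: apply_step_def lift_def)
qed

lemma fold_lift:
  assumes U: "U \<in> carrier_mat D D" and val: "\<And>G. Gate G \<in> set steps \<Longrightarrow> unitary_mat (D*K) G"
    and v: "dim_vec v = D*K" and w: "dim_vec w = m"
  shows "fold (apply_step (K*m) U) (map (lift m) steps) (vkron v w) = vkron (fold (apply_step K U) steps v) w"
  using val v
proof (induction steps arbitrary: v)
  case Nil thus ?case by simp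
next
  case (Cons s steps)
  have st: "apply_step (K*m) U (lift m s) (vkron v w) = vkron (apply_step K U s v) w \<and> dim_vec (apply_step K U s v) = D*K"
    using step_lift[OF U _ Cons.prems(2) w, of s] Cons.prems(1) by auto
  have "fold (apply_step (K*m) U) (map (lift m) (s # steps)) (vkron v w)
      = fold (apply_step (K*m) U) (map (lift m) steps) (vkron (apply_step K U s v) w)"
    using st by simp
  also have "\<dots> = vkron (fold (apply_step K U) steps (apply_step K U s v)) w"
    using Cons.IH[of "apply_step K U s v"] Cons.prems st by auto
  finally show ?case by simp
qed

lemma final_alg:
  assumes dA: "dA > 0" and d: "d > 0" and U: "U \<in> carrier_mat (dA*d) (dA*d)"
  shows "final_state (Kn dA d (Suc n)) U (alg dA d (Suc n)) = vkron (final_state (Kn dA d n) U (alg dA d n)) (rnd.tauv dA d U)"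
proof -
  interpret r: rnd dA d "Kn dA d n" using rnd_inst dA d .
  have dr: "dim_row U = dA*d" using U by simp
  have "final_state (Kn dA d (Suc n)) U (alg dA d (Suc n)) =
     fold (apply_step (Kn dA d n * PP dA d) U) (map (lift (PP dA d)) (alg dA d n))
       (fold (apply_step (Kn dA d n * PP dA d) U) r.round_steps (unit_vec (dA*d*(Kn dA d n * PP dA d)) 0))"
    unfolding final_state_def using dr by simp
  also have "fold (apply_step (Kn dA d n * PP dA d) U) r.round_steps (unit_vec (dA*d*(Kn dA d n * PP dA d)) 0)
       = vkron (unit_vec (dA*d*Kn dA d n) 0) (r.tauv U)"
    using r.round_fold[OF U] by (simp add: PP_def)
  also have "fold (apply_step (Kn dA d n * PP dA d) U) (map (lift (PP dA d)) (alg dA d n)) (vkron (unit_vec (dA*d*Kn dA d n) 0) (r.tauv U))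
      = vkron (fold (apply_step (Kn dA d n) U) (alg dA d n) (unit_vec (dA*d*Kn dA d n) 0)) (r.tauv U)"
    by (rule fold_lift[OF U]) (use alg_valid[OF dA d, of n] in \<open>auto simp: valid_alg_def r.tauv_def PP_def\<close>)
  finally show ?thesis unfolding final_state_def using dr by simp
qed

lemma final_dim: assumes "dA > 0" "d > 0" "U \<in> carrier_mat (dA*d) (dA*d)"
  shows "dim_vec (final_state (Kn dA d n) U (alg dA d n)) = dA*d*Kn dA d n"
proof (induction n)
  case 0 thus ?case using assms by (simp add: final_state_def)
next
  case (Suc n)
  interpret r: rnd dA d "Kn dA d n" using rnd_inst assms(1,2) .
  show ?case using final_alg[OF assms, of n] Suc by (simp add: vkron_def r.tauv_def PP_def mult.assoc)
qed



fun cnt :: "nat \<Rightarrow> nat \<Rightarrow> nat \<Rightarrow> nat \<Rightarrow> nat" where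
  "cnt P D 0 x = 0"
| "cnt P D (Suc n) x = cnt P D n (x div P) + (if x mod P div D div D = 0 then 1 else 0)"

lemma cnt_le: "cnt P D n x \<le> n"
proof (induction n arbitrary: x)
  case (Suc n)
  have "cnt P D n (x div P) \<le> n" by (rule Suc.IH)
  thus ?case by simp
qed simp

lemma sum_vkron:
  assumes v: "dim_vec v = a" and w: "dim_vec w = b"
  shows "(\<Sum>x<a*b. (cmod (vkron v w $ x))\<^sup>2 * g (x div b) (x mod b)) =
         (\<Sum>y<a. \<Sum>p<b. (cmod (v $ y))\<^sup>2 * (cmod (w $ p))\<^sup>2 * g y p)"
proof -
  have "(\<Sum>x<a*b. (cmod (vkron v w $ x))\<^sup>2 * g (x div b) (x mod b)) =
        (\<Sum>y<a. \<Sum>p<b. (cmod (vkron v w $ (y*b+p)))\<^sup>2 * g ((y*b+p) div b) ((y*b+p) mod b))"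
    by (rule sum_split)
  also have "\<dots> = (\<Sum>y<a. \<Sum>p<b. (cmod (v $ y))\<^sup>2 * (cmod (w $ p))\<^sup>2 * g y p)"
  proof (intro sum.cong refl)
    fix y p assume y: "y \<in> {..<a}" and p: "p \<in> {..<b}"
    have yp: "y*b+p < a*b" using y p idx_lt by auto
    show "(cmod (vkron v w $ (y*b+p)))\<^sup>2 * g ((y*b+p) div b) ((y*b+p) mod b) = (cmod (v $ y))\<^sup>2 * (cmod (w $ p))\<^sup>2 * g y p"
      using yp p v w by (simp add: vkron_def divmod_eq norm_mult power_mult_distrib)
  qed
  finally show ?thesis .
qed

context
  fixes dA d :: nat and U :: "complex mat"
  assumes dA: "dA > 0" and d: "d > 0" and U: "U \<in> carrier_mat (dA*d) (dA*d)"
begin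

definition "fs n = final_state (Kn dA d n) U (alg dA d n)"
definition "tv = rnd.tauv dA d U"
definition "ee p = (if p div (dA*d) div (dA*d) = 0 then 1 else (0::real))"
definition "t0 = (\<Sum>p<PP dA d. (cmod (tv $ p))\<^sup>2)"
definition "t1 = (\<Sum>p<PP dA d. (cmod (tv $ p))\<^sup>2 * ee p)"
definition "ct n x = real (cnt (PP dA d) (dA*d) n x)"

lemma tv_dim: "dim_vec tv = PP dA d"
proof -
  interpret r: rnd dA d 1 using dA d by unfold_locales auto
  show ?thesis by (simp add: tv_def r.tauv_def PP_def)
qed

lemma fs_dim: "dim_vec (fs n) = dA*d*Kn dA d n"
  unfolding fs_def using final_dim[OF dA d U] .

lemma fs_Suc: "fs (Suc n) = vkron (fs n) tv"
  unfolding fs_def tv_def using final_alg[OF dA d U] .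

lemma ct_Suc: "ct (Suc n) x = ct n (x div PP dA d) + ee (x mod PP dA d)"
  by (simp add: ct_def ee_def)

lemma ee_sq: "ee p * ee p = ee p" by (simp add: ee_def)

definition "M k n = (\<Sum>x<dA*d*Kn dA d n. (cmod (fs n $ x))\<^sup>2 * (ct n x)^k)"

lemma M_Suc: "M k (Suc n) = (\<Sum>y<dA*d*Kn dA d n. \<Sum>p<PP dA d. (cmod (fs n $ y))\<^sup>2 * (cmod (tv $ p))\<^sup>2 * (ct n y + ee p)^k)"
proof -
  have "M k (Suc n) = (\<Sum>x<(dA*d*Kn dA d n)*PP dA d. (cmod (vkron (fs n) tv $ x))\<^sup>2 * (\<lambda>y p. (ct n y + ee p)^k) (x div PP dA d) (x mod PP dA d))"
    unfolding M_def fs_Suc by (simp add: ct_Suc mult.assoc)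
  also have "\<dots> = (\<Sum>y<dA*d*Kn dA d n. \<Sum>p<PP dA d. (cmod (fs n $ y))\<^sup>2 * (cmod (tv $ p))\<^sup>2 * (ct n y + ee p)^k)"
    by (rule sum_vkron[OF fs_dim tv_dim])
  finally show ?thesis .
qed

lemma moments:
  assumes t0: "t0 = 1"
  shows "M 0 n = 1 \<and> M 1 n = n * t1 \<and> M 2 n = n * t1 + n * (n - 1) * t1^2"
proof (induction n)
  case 0
  have "M 0 0 = (\<Sum>x<dA*d. (cmod (unit_vec (dA*d) 0 $ x))\<^sup>2)"
    using U by (simp add: M_def fs_def final_state_def)
  also have "\<dots> = (\<Sum>x<dA*d. if x = 0 then 1 else 0)"
    by (intro sum.cong refl) (use dA d in auto)
  also have "\<dots> = 1" using dA d by (simp add: sum.delta')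
  finally have "M 0 0 = 1" .
  moreover have "M 1 0 = 0" "M 2 0 = 0" by (simp_all add: M_def ct_def)
  ultimately show ?case by simp
next
  case (Suc n)
  let ?A = "{..<dA*d*Kn dA d n}" and ?B = "{..<PP dA d}"
  let ?a = "\<lambda>y. (cmod (fs n $ y))\<^sup>2" and ?b = "\<lambda>p. (cmod (tv $ p))\<^sup>2"
  have t0': "(\<Sum>p\<in>?B. ?b p) = 1" using t0 by (simp add: t0_def)
  have t1': "(\<Sum>p\<in>?B. ?b p * ee p) = t1" by (simp add: t1_def)
  have gen: "(\<Sum>y\<in>?A. \<Sum>p\<in>?B. ?a y * ?b p * (F y + G p)) = (\<Sum>y\<in>?A. ?a y * F y) * (\<Sum>p\<in>?B. ?b p) + (\<Sum>y\<in>?A. ?a y) * (\<Sum>p\<in>?B. ?b p * G p)"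
    for F G :: "nat \<Rightarrow> real"
    by (simp add: sum.distrib sum_distrib_left sum_distrib_right algebra_simps)
  have M0: "M 0 (Suc n) = 1"
  proof -
    have "M 0 (Suc n) = (\<Sum>y\<in>?A. \<Sum>p\<in>?B. ?a y * ?b p * ((\<lambda>y. 1) y + (\<lambda>p. 0) p))" by (simp add: M_Suc)
    also have "\<dots> = 1" unfolding gen using Suc t0' by (simp add: M_def)
    finally show ?thesis .
  qed
  have M1: "M 1 (Suc n) = Suc n * t1"
  proof -
    have "M 1 (Suc n) = (\<Sum>y\<in>?A. \<Sum>p\<in>?B. ?a y * ?b p * (ct n y + ee p))" by (simp add: M_Suc)
    also have "\<dots> = M 1 n + M 0 n * t1" unfolding gen using t0' t1' by (simp add: M_def)
    finally show ?thesis using Suc by (simp add: algebra_simps)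
  qed
  have M2: "M 2 (Suc n) = Suc n * t1 + Suc n * (Suc n - 1) * t1^2"
  proof -
    have "M 2 (Suc n) = (\<Sum>y\<in>?A. \<Sum>p\<in>?B. ?a y * ?b p * ((ct n y)^2 + ee p * (1 + 2 * ct n y)))"
      unfolding M_Suc by (intro sum.cong refl) (simp add: power2_eq_square algebra_simps ee_sq)
    also have "\<dots> = (\<Sum>y\<in>?A. \<Sum>p\<in>?B. ?a y * ?b p * ((ct n y)^2 + ee p) + ?a y * ?b p * (2 * ct n y) * ee p)"
      by (intro sum.cong refl) (simp add: algebra_simps)
    also have "\<dots> = (\<Sum>y\<in>?A. \<Sum>p\<in>?B. ?a y * ?b p * ((ct n y)^2 + ee p)) + (\<Sum>y\<in>?A. \<Sum>p\<in>?B. ?a y * ?b p * (2 * ct n y) * ee p)"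
      by (simp add: sum.distrib)
    also have "(\<Sum>y\<in>?A. \<Sum>p\<in>?B. ?a y * ?b p * ((ct n y)^2 + ee p)) = M 2 n + M 0 n * t1"
      unfolding gen using t0' t1' by (simp add: M_def)
    also have "(\<Sum>y\<in>?A. \<Sum>p\<in>?B. ?a y * ?b p * (2 * ct n y) * ee p) = 2 * M 1 n * t1"
    proof -
      have "(\<Sum>y\<in>?A. \<Sum>p\<in>?B. ?a y * ?b p * (2 * ct n y) * ee p) = (\<Sum>y\<in>?A. (2 * ?a y * ct n y) * (\<Sum>p\<in>?B. ?b p * ee p))"
        by (simp add: sum_distrib_left algebra_simps)
      also have "\<dots> = 2 * M 1 n * t1" using t1' by (simp add: M_def sum_distrib_left sum_distrib_right algebra_simps)
      finally show ?thesis .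
    qed
    finally have "M 2 (Suc n) = M 2 n + M 0 n * t1 + 2 * M 1 n * t1" .
    thus ?thesis using Suc by (cases n) (simp_all add: algebra_simps power2_eq_square)
  qed
  show ?case using M0 M1 M2 by (simp add: algebra_simps)
qed

end


lemma reorder4:
  fixes f :: "nat \<Rightarrow> nat \<Rightarrow> nat \<Rightarrow> nat \<Rightarrow> 'a::comm_monoid_add"
  shows "(\<Sum>a1\<in>A. \<Sum>i1\<in>I. \<Sum>a2\<in>A. \<Sum>i2\<in>I. f a1 i1 a2 i2) = (\<Sum>i1\<in>I. \<Sum>i2\<in>I. \<Sum>a1\<in>A. \<Sum>a2\<in>A. f a1 i1 a2 i2)"
proof -
  have "(\<Sum>a1\<in>A. \<Sum>i1\<in>I. \<Sum>a2\<in>A. \<Sum>i2\<in>I. f a1 i1 a2 i2) = (\<Sum>a1\<in>A. \<Sum>i1\<in>I. \<Sum>i2\<in>I. \<Sum>a2\<in>A. f a1 i1 a2 i2)"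
    by (rule sum.cong[OF refl], rule sum.cong[OF refl], rule sum.swap)
  also have "\<dots> = (\<Sum>i1\<in>I. \<Sum>a1\<in>A. \<Sum>i2\<in>I. \<Sum>a2\<in>A. f a1 i1 a2 i2)"
    by (rule sum.swap)
  also have "\<dots> = (\<Sum>i1\<in>I. \<Sum>i2\<in>I. \<Sum>a1\<in>A. \<Sum>a2\<in>A. f a1 i1 a2 i2)"
    by (rule sum.cong[OF refl], rule sum.swap)
  finally show ?thesis .
qed

lemma sum_prod4:
  fixes g h :: "nat \<Rightarrow> 'a::comm_semiring_0"
  shows "(\<Sum>a1\<in>A. \<Sum>a2\<in>B. g a1 * h a2) = (\<Sum>a1\<in>A. g a1) * (\<Sum>a2\<in>B. h a2)"
  by (simp add: sum_product)

context
  fixes dA d :: nat and U :: "complex mat" and \<psi> :: "complex vec"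
  assumes dA: "dA > 0" and d: "d > 0" and U: "U \<in> carrier_mat (dA*d) (dA*d)"
    and sp: "ptrace_A dA d (outer (U *\<^sub>v unit_vec (dA*d) 0)) = outer \<psi>"
    and pd: "dim_vec \<psi> = d" and pn: "(\<Sum>i<d. (cmod (\<psi> $ i))\<^sup>2) = 1"
begin

interpretation r: rnd dA d 1 using dA d by unfold_locales auto

abbreviation "ph \<equiv> r.\<phi> U"

lemma phi_eq: "k < dA*d \<Longrightarrow> (U *\<^sub>v unit_vec (dA*d) 0) $ k = ph k"
proof -
  assume k: "k < dA*d"
  have "(U *\<^sub>v unit_vec (dA*d) 0) $ k = (\<Sum>j<dA*d. U $$ (k,j) * unit_vec (dA*d) 0 $ j)"
    using mat_vec_entry[of k U "unit_vec (dA*d) 0"] U k by simp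
  also have "\<dots> = (\<Sum>j<dA*d. if j = 0 then U $$ (k,0) else 0)"
    by (intro sum.cong refl) (use dA d in auto)
  also have "\<dots> = ph k" using dA d by (simp add: sum.delta' r.\<phi>_def)
  finally show ?thesis .
qed

lemma ad_lt: "a < dA \<Longrightarrow> i < d \<Longrightarrow> a*d+i < dA*d" using idx_lt by blast

lemma rho: assumes i: "i < d" and j: "j < d"
  shows "(\<Sum>a<dA. ph (a*d+i) * cnj (ph (a*d+j))) = \<psi> $ i * cnj (\<psi> $ j)"
proof -
  let ?v = "U *\<^sub>v unit_vec (dA*d) 0"
  have dv: "dim_vec ?v = dA*d" using U by simp
  have "ptrace_A dA d (outer ?v) $$ (i,j) = (\<Sum>a<dA. outer ?v $$ (a*d+i, a*d+j))"
    using i j by (simp add: ptrace_A_def)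
  also have "\<dots> = (\<Sum>a<dA. ph (a*d+i) * cnj (ph (a*d+j)))"
    by (intro sum.cong refl) (use i j dv ad_lt phi_eq in \<open>auto simp: outer_def\<close>)
  finally have "ptrace_A dA d (outer ?v) $$ (i,j) = (\<Sum>a<dA. ph (a*d+i) * cnj (ph (a*d+j)))" .
  moreover have "outer \<psi> $$ (i,j) = \<psi> $ i * cnj (\<psi> $ j)" using i j pd by (simp add: outer_def)
  ultimately show ?thesis using sp by simp
qed

lemma split_D: "(\<Sum>p<dA*d. f p) = (\<Sum>a<dA. \<Sum>i<d. f (a*d+i))"
  by (rule sum_split)

lemma psi_norm: "(\<Sum>i<d. \<psi> $ i * cnj (\<psi> $ i)) = 1"
proof -
  have "(\<Sum>i<d. \<psi> $ i * cnj (\<psi> $ i)) = (\<Sum>i<d. complex_of_real ((cmod (\<psi> $ i))\<^sup>2))"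
    by (intro sum.cong refl) (rule complex_norm_square[symmetric])
  also have "\<dots> = complex_of_real (\<Sum>i<d. (cmod (\<psi> $ i))\<^sup>2)" by (rule of_real_sum[symmetric])
  finally show ?thesis using pn by simp
qed

lemma phi_norm: "(\<Sum>p<dA*d. ph p * cnj (ph p)) = 1"
proof -
  have "(\<Sum>p<dA*d. ph p * cnj (ph p)) = (\<Sum>a<dA. \<Sum>i<d. ph (a*d+i) * cnj (ph (a*d+i)))"
    by (rule split_D)
  also have "\<dots> = (\<Sum>i<d. \<Sum>a<dA. ph (a*d+i) * cnj (ph (a*d+i)))" by (rule sum.swap)
  also have "\<dots> = (\<Sum>i<d. \<psi> $ i * cnj (\<psi> $ i))" by (intro sum.cong refl) (simp add: rho)
  finally show ?thesis using psi_norm by simp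
qed

lemma sw_eq: "a1 < dA \<Longrightarrow> i1 < d \<Longrightarrow> a2 < dA \<Longrightarrow> i2 < d \<Longrightarrow> r.sw1 (a1*d+i1) (a2*d+i2) = a1*d+i2"
  unfolding r.sw1_def by (simp add: divmod_eq)

definition "W p1 p2 = ph p1 * cnj (ph p2)"
definition "Ws p1 p2 = ph (r.sw1 p1 p2) * cnj (ph (r.sw1 p2 p1))"

lemma split_DD: "(\<Sum>p1<dA*d. \<Sum>p2<dA*d. f p1 p2) = (\<Sum>a1<dA. \<Sum>i1<d. \<Sum>a2<dA. \<Sum>i2<d. f (a1*d+i1) (a2*d+i2))"
  by (simp add: split_D)

lemma SW: "(\<Sum>p1<dA*d. \<Sum>p2<dA*d. W p1 p2 * cnj (W p1 p2)) = 1"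
proof -
  have "(\<Sum>p1<dA*d. \<Sum>p2<dA*d. W p1 p2 * cnj (W p1 p2)) = (\<Sum>p1<dA*d. \<Sum>p2<dA*d. (ph p1 * cnj (ph p1)) * (ph p2 * cnj (ph p2)))"
    by (intro sum.cong refl) (simp add: W_def algebra_simps)
  also have "\<dots> = 1" by (simp add: sum_prod4 phi_norm)
  finally show ?thesis .
qed

lemma SWs: "(\<Sum>p1<dA*d. \<Sum>p2<dA*d. Ws p1 p2 * cnj (Ws p1 p2)) = 1"
proof -
  have "(\<Sum>p1<dA*d. \<Sum>p2<dA*d. Ws p1 p2 * cnj (Ws p1 p2)) =
        (\<Sum>a1<dA. \<Sum>i1<d. \<Sum>a2<dA. \<Sum>i2<d. Ws (a1*d+i1) (a2*d+i2) * cnj (Ws (a1*d+i1) (a2*d+i2)))"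
    by (rule split_DD)
  also have "\<dots> = (\<Sum>i1<d. \<Sum>i2<d. \<Sum>a1<dA. \<Sum>a2<dA. Ws (a1*d+i1) (a2*d+i2) * cnj (Ws (a1*d+i1) (a2*d+i2)))"
    by (rule reorder4)
  also have "\<dots> = (\<Sum>i1<d. \<Sum>i2<d. \<Sum>a1<dA. \<Sum>a2<dA. (ph (a1*d+i2) * cnj (ph (a1*d+i2))) * (ph (a2*d+i1) * cnj (ph (a2*d+i1))))"
    by (intro sum.cong refl) (simp only: Ws_def lessThan_iff sw_eq, simp add: algebra_simps)
  also have "\<dots> = (\<Sum>i1<d. \<Sum>i2<d. (\<psi> $ i2 * cnj (\<psi> $ i2)) * (\<psi> $ i1 * cnj (\<psi> $ i1)))"
    by (intro sum.cong refl) (simp add: sum_prod4 rho)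
  also have "\<dots> = 1" by (simp add: sum_prod4[symmetric] psi_norm sum_distrib_left[symmetric] sum_distrib_right[symmetric])
  finally show ?thesis .
qed

definition "s = (\<Sum>i<d. (\<psi> $ i)\<^sup>2)"

lemma X: "(\<Sum>p1<dA*d. \<Sum>p2<dA*d. W p1 p2 * cnj (Ws p1 p2)) = s * cnj s"
proof -
  have "(\<Sum>p1<dA*d. \<Sum>p2<dA*d. W p1 p2 * cnj (Ws p1 p2)) =
        (\<Sum>a1<dA. \<Sum>i1<d. \<Sum>a2<dA. \<Sum>i2<d. W (a1*d+i1) (a2*d+i2) * cnj (Ws (a1*d+i1) (a2*d+i2)))"
    by (rule split_DD)
  also have "\<dots> = (\<Sum>i1<d. \<Sum>i2<d. \<Sum>a1<dA. \<Sum>a2<dA. W (a1*d+i1) (a2*d+i2) * cnj (Ws (a1*d+i1) (a2*d+i2)))"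
    by (rule reorder4)
  also have "\<dots> = (\<Sum>i1<d. \<Sum>i2<d. \<Sum>a1<dA. \<Sum>a2<dA. (ph (a1*d+i1) * cnj (ph (a1*d+i2))) * (ph (a2*d+i1) * cnj (ph (a2*d+i2))))"
    by (intro sum.cong refl) (simp only: W_def Ws_def lessThan_iff sw_eq, simp add: algebra_simps)
  also have "\<dots> = (\<Sum>i1<d. \<Sum>i2<d. (\<psi> $ i1 * cnj (\<psi> $ i2)) * (\<psi> $ i1 * cnj (\<psi> $ i2)))"
    by (intro sum.cong refl) (simp add: sum_prod4 rho)
  also have "\<dots> = (\<Sum>i1<d. \<Sum>i2<d. (\<psi> $ i1)\<^sup>2 * cnj ((\<psi> $ i2)\<^sup>2))"
    by (intro sum.cong refl) (simp add: power2_eq_square algebra_simps)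
  also have "\<dots> = s * cnj s" by (simp add: s_def sum_prod4)
  finally show ?thesis .
qed

lemma Y: "(\<Sum>p1<dA*d. \<Sum>p2<dA*d. Ws p1 p2 * cnj (W p1 p2)) = s * cnj s"
proof -
  have "(\<Sum>p1<dA*d. \<Sum>p2<dA*d. Ws p1 p2 * cnj (W p1 p2)) = cnj (\<Sum>p1<dA*d. \<Sum>p2<dA*d. W p1 p2 * cnj (Ws p1 p2))"
    by (simp add: mult.commute)
  also have "\<dots> = s * cnj s" unfolding X by (simp add: mult.commute)
  finally show ?thesis .
qed

lemma sumP: "(\<Sum>p<PP dA d. f p) = (\<Sum>c<2. \<Sum>p1<dA*d. \<Sum>p2<dA*d. f ((c*(dA*d)+p1)*(dA*d)+p2))"
proof -
  have "(\<Sum>p<PP dA d. f p) = (\<Sum>u<2*(dA*d). \<Sum>p2<dA*d. f (u*(dA*d)+p2))"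
    unfolding PP_def by (rule sum_split)
  also have "\<dots> = (\<Sum>c<2. \<Sum>p1<dA*d. \<Sum>p2<dA*d. f ((c*(dA*d)+p1)*(dA*d)+p2))"
    by (rule sum_split)
  finally show ?thesis .
qed

lemma tv_at: assumes "c < 2" "p1 < dA*d" "p2 < dA*d"
  shows "rnd.tauv dA d U $ ((c*(dA*d)+p1)*(dA*d)+p2) = (1/2) * (W p1 p2 + (if c = 0 then 1 else -1) * Ws p1 p2)"
proof -
  have lt: "(c*(dA*d)+p1)*(dA*d)+p2 < PP dA d" using r.small_lt[OF assms] by (simp add: PP_def)
  show ?thesis using lt assms by (simp add: r.tauv_def r.tau_def W_def Ws_def divmod_eq PP_def)
qed

lemma ee_at: assumes "c < 2" "p1 < dA*d" "p2 < dA*d"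
  shows "ee dA d ((c*(dA*d)+p1)*(dA*d)+p2) = (if c = 0 then 1 else 0)"
proof -
  have "(c*(dA*d)+p1) div (dA*d) = c" "((c*(dA*d)+p1)*(dA*d)+p2) div (dA*d) = c*(dA*d)+p1" using assms by (simp_all add: divmod_eq)
  thus ?thesis using ee_def[OF dA d U] by simp
qed

end


context
  fixes dA d :: nat and U :: "complex mat" and \<psi> :: "complex vec"
  assumes dA: "dA > 0" and d: "d > 0" and U: "U \<in> carrier_mat (dA*d) (dA*d)"
    and sp: "ptrace_A dA d (outer (U *\<^sub>v unit_vec (dA*d) 0)) = outer \<psi>"
    and pd: "dim_vec \<psi> = d" and pn: "(\<Sum>i<d. (cmod (\<psi> $ i))\<^sup>2) = 1"
begin

abbreviation "WW \<equiv> W U"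
abbreviation "WWs \<equiv> Ws d U"

lemma two_sum: "(\<Sum>c<(2::nat). f c) = f 0 + f 1"
  by (simp add: numeral_2_eq_2)

lemma t0_one: "t0 dA d U = 1"
proof -
  let ?D = "dA*d"
  let ?tv = "tv dA d U"
  have tvd: "?tv = rnd.tauv dA d U" using tv_def[OF dA d U] .
  have "complex_of_real (t0 dA d U) = (\<Sum>p<PP dA d. complex_of_real ((cmod (?tv $ p))\<^sup>2))"
    using t0_def[OF dA d U] by simp
  also have "\<dots> = (\<Sum>p<PP dA d. ?tv $ p * cnj (?tv $ p))"
    by (intro sum.cong refl) (rule complex_norm_square)
  also have "\<dots> = (\<Sum>c<2. \<Sum>p1<?D. \<Sum>p2<?D. ?tv $ ((c*?D+p1)*?D+p2) * cnj (?tv $ ((c*?D+p1)*?D+p2)))"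
    by (rule sumP[OF dA d U sp pd pn])
  also have "\<dots> = (\<Sum>c<(2::nat). \<Sum>p1<?D. \<Sum>p2<?D. ((1/2) * (WW p1 p2 + (if c = 0 then 1 else -1) * WWs p1 p2)) * cnj ((1/2) * (WW p1 p2 + (if c = 0 then 1 else -1) * WWs p1 p2)))"
    by (intro sum.cong refl) (simp add: tvd tv_at[OF dA d U sp pd pn])
  also have "\<dots> = (\<Sum>p1<?D. \<Sum>p2<?D. (1/2) * (WW p1 p2 * cnj (WW p1 p2)) + (1/2) * (WWs p1 p2 * cnj (WWs p1 p2)))"
    by (simp add: two_sum sum.distrib[symmetric] algebra_simps)
  also have "\<dots> = (1/2) * (\<Sum>p1<?D. \<Sum>p2<?D. WW p1 p2 * cnj (WW p1 p2)) + (1/2) * (\<Sum>p1<?D. \<Sum>p2<?D. WWs p1 p2 * cnj (WWs p1 p2))"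
    by (simp add: sum.distrib sum_distrib_left)
  also have "\<dots> = 1" using SW[OF dA d U sp pd pn] SWs[OF dA d U sp pd pn] by simp
  finally show ?thesis by (metis of_real_eq_1_iff)
qed

lemma t1_val: "t1 dA d U = (1 + realness \<psi>) / 2"
proof -
  let ?D = "dA*d"
  let ?tv = "tv dA d U"
  let ?ee = "ee dA d"
  let ?s = "s d \<psi>"
  have tvd: "?tv = rnd.tauv dA d U" using tv_def[OF dA d U] .
  have "complex_of_real (t1 dA d U) = (\<Sum>p<PP dA d. complex_of_real ((cmod (?tv $ p))\<^sup>2) * complex_of_real (?ee p))"
    using t1_def[OF dA d U] by simp
  also have "\<dots> = (\<Sum>p<PP dA d. ?tv $ p * cnj (?tv $ p) * complex_of_real (?ee p))"
    by (intro sum.cong refl) (simp only: complex_norm_square)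
  also have "\<dots> = (\<Sum>c<2. \<Sum>p1<?D. \<Sum>p2<?D. ?tv $ ((c*?D+p1)*?D+p2) * cnj (?tv $ ((c*?D+p1)*?D+p2)) * complex_of_real (?ee ((c*?D+p1)*?D+p2)))"
    by (rule sumP[OF dA d U sp pd pn])
  also have "\<dots> = (\<Sum>c<(2::nat). \<Sum>p1<?D. \<Sum>p2<?D. ((1/2) * (WW p1 p2 + (if c = 0 then 1 else -1) * WWs p1 p2)) * cnj ((1/2) * (WW p1 p2 + (if c = 0 then 1 else -1) * WWs p1 p2)) * (if c = 0 then 1 else 0))"
    by (intro sum.cong refl) (simp add: tvd tv_at[OF dA d U sp pd pn] ee_at[OF dA d U sp pd pn])
  also have "\<dots> = (\<Sum>p1<?D. \<Sum>p2<?D. (1/4) * (WW p1 p2 * cnj (WW p1 p2)) + (1/4) * (WWs p1 p2 * cnj (WWs p1 p2))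
       + (1/4) * (WW p1 p2 * cnj (WWs p1 p2)) + (1/4) * (WWs p1 p2 * cnj (WW p1 p2)))"
    by (simp add: two_sum algebra_simps)
  also have "\<dots> = (1/4) * (\<Sum>p1<?D. \<Sum>p2<?D. WW p1 p2 * cnj (WW p1 p2)) + (1/4) * (\<Sum>p1<?D. \<Sum>p2<?D. WWs p1 p2 * cnj (WWs p1 p2))
       + (1/4) * (\<Sum>p1<?D. \<Sum>p2<?D. WW p1 p2 * cnj (WWs p1 p2)) + (1/4) * (\<Sum>p1<?D. \<Sum>p2<?D. WWs p1 p2 * cnj (WW p1 p2))"
    by (simp add: sum.distrib sum_distrib_left)
  also have "\<dots> = (1/4) * 1 + (1/4) * 1 + (1/4) * (?s * cnj ?s) + (1/4) * (?s * cnj ?s)"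
    using SW[OF dA d U sp pd pn] SWs[OF dA d U sp pd pn] X[OF dA d U sp pd pn] Y[OF dA d U sp pd pn] by simp
  also have "\<dots> = complex_of_real ((1 + (cmod ?s)\<^sup>2) / 2)"
    by (simp add: complex_norm_square[symmetric] field_simps)
  finally have "t1 dA d U = (1 + (cmod ?s)\<^sup>2) / 2" using of_real_eq_iff by blast
  moreover have "realness \<psi> = (cmod ?s)\<^sup>2" using s_def[OF dA d U sp pd pn] pd by (simp add: realness_def)
  ultimately show ?thesis by simp
qed

end


lemma pos_dims:
  assumes u: "is_unit_vec d \<psi>" and sp: "state_prep dA d U (outer \<psi>)"
  shows "dA > 0" "d > 0"
proof -
  have pd: "dim_vec \<psi> = d" and pn: "(\<Sum>i<d. (cmod (\<psi> $ i))\<^sup>2) = 1" using u by (auto simp: is_unit_vec_def)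
  show "d > 0" using pn by (cases d) auto
  show "dA > 0"
  proof (rule ccontr)
    assume "\<not> dA > 0"
    hence dA0: "dA = 0" by simp
    have pt: "ptrace_A dA d (outer (U *\<^sub>v unit_vec (dA*d) 0)) = outer \<psi>" using sp by (simp add: state_prep_def)
    have "\<psi> $ i = 0" if i: "i < d" for i
    proof -
      have "ptrace_A dA d (outer (U *\<^sub>v unit_vec (dA*d) 0)) $$ (i,i) = 0" using i dA0 by (simp add: ptrace_A_def)
      hence "\<psi> $ i * cnj (\<psi> $ i) = 0" using pt i pd by (simp add: outer_def)
      thus ?thesis by simp
    qed
    hence "(\<Sum>i<d. (cmod (\<psi> $ i))\<^sup>2) = 0" by simp
    thus False using pn by simp
  qed
qed

lemma realness_nonneg: "realness v \<ge> 0" by (simp add: realness_def)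

lemma stats:
  assumes u: "is_unit_vec d \<psi>" and sp: "state_prep dA d U (outer \<psi>)"
  shows "dA > 0" "d > 0" "U \<in> carrier_mat (dA*d) (dA*d)" "t0 dA d U = 1" "t1 dA d U = (1 + realness \<psi>)/2"
    "t1 dA d U \<le> 1"
proof -
  show dA: "dA > 0" and d: "d > 0" using pos_dims[OF u sp] by auto
  show U: "U \<in> carrier_mat (dA*d) (dA*d)" using sp by (simp add: state_prep_def unitary_mat_def)
  have pt: "ptrace_A dA d (outer (U *\<^sub>v unit_vec (dA*d) 0)) = outer \<psi>" using sp by (simp add: state_prep_def)
  have pd: "dim_vec \<psi> = d" and pn: "(\<Sum>i<d. (cmod (\<psi> $ i))\<^sup>2) = 1" using u by (auto simp: is_unit_vec_def)
  show t0: "t0 dA d U = 1" by (rule t0_one[OF dA d U pt pd pn])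
  show "t1 dA d U = (1 + realness \<psi>)/2" by (rule t1_val[OF dA d U pt pd pn])
  have "t1 dA d U \<le> t0 dA d U"
    unfolding t1_def[OF dA d U] t0_def[OF dA d U]
    by (rule sum_mono) (simp add: ee_def[OF dA d U])
  thus "t1 dA d U \<le> 1" using t0 by simp
qed

context
  fixes dA d :: nat and U :: "complex mat"
  assumes dA: "dA > 0" and d: "d > 0" and U: "U \<in> carrier_mat (dA*d) (dA*d)" and t0: "t0 dA d U = 1"
begin

abbreviation "aa n x \<equiv> (cmod (fs dA d U n $ x))\<^sup>2"

lemma prob_fs: "prob_outcome (final_state (Kn dA d n) U (alg dA d n)) Q = (\<Sum>x<dA*d*Kn dA d n. if Q x then aa n x else 0)"
  unfolding prob_outcome_def fs_def[OF dA d U, symmetric] fs_dim[OF dA d U] ..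

lemma mom: "M dA d U 0 n = 1" "M dA d U 1 n = n * t1 dA d U" "M dA d U 2 n = n * t1 dA d U + n * (n - 1) * (t1 dA d U)^2"
  using moments[OF dA d U t0, of n] by auto

lemma M_eq: "M dA d U k n = (\<Sum>x<dA*d*Kn dA d n. aa n x * ct dA d n x ^ k)"
  by (rule M_def[OF dA d U])

lemma part1:
  shows "prob_outcome (final_state (Kn dA d 2) U (alg dA d 2)) (\<lambda>x. cnt (PP dA d) (dA*d) 2 x = 2) = (t1 dA d U)^2"
    "prob_outcome (final_state (Kn dA d 2) U (alg dA d 2)) (\<lambda>x. \<not> cnt (PP dA d) (dA*d) 2 x = 2) = 1 - (t1 dA d U)^2"
proof -
  let ?A = "{..<dA*d*Kn dA d 2}"
  let ?c = "\<lambda>x. cnt (PP dA d) (dA*d) 2 x"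
  have ind: "(if ?c x = 2 then aa 2 x else 0) = aa 2 x * ((ct dA d 2 x)^2 - ct dA d 2 x) / 2" for x
  proof -
    have "?c x \<le> 2" by (rule cnt_le)
    hence "?c x = 0 \<or> ?c x = 1 \<or> ?c x = 2" by auto
    thus ?thesis by (auto simp: ct_def[OF dA d U])
  qed
  have "prob_outcome (final_state (Kn dA d 2) U (alg dA d 2)) (\<lambda>x. ?c x = 2) = (\<Sum>x\<in>?A. aa 2 x * ((ct dA d 2 x)^2 - ct dA d 2 x) / 2)"
    unfolding prob_fs by (rule sum.cong[OF refl]) (rule ind)
  also have "\<dots> = (M dA d U 2 2 - M dA d U 1 2) / 2"
    unfolding M_eq by (simp add: sum_divide_distrib[symmetric] sum_subtractf[symmetric] algebra_simps)
  also have "\<dots> = (t1 dA d U)^2" unfolding mom by simp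
  finally show p1: "prob_outcome (final_state (Kn dA d 2) U (alg dA d 2)) (\<lambda>x. ?c x = 2) = (t1 dA d U)^2" .
  have "prob_outcome (final_state (Kn dA d 2) U (alg dA d 2)) (\<lambda>x. \<not> ?c x = 2) =
     (\<Sum>x\<in>?A. aa 2 x) - (\<Sum>x\<in>?A. if ?c x = 2 then aa 2 x else 0)"
    unfolding prob_fs by (simp add: sum_subtractf[symmetric]) (intro sum.cong refl, simp)
  also have "(\<Sum>x\<in>?A. aa 2 x) = M dA d U 0 2" unfolding M_eq by simp
  also have "(\<Sum>x\<in>?A. if ?c x = 2 then aa 2 x else 0) = (t1 dA d U)^2" using p1 unfolding prob_fs .
  finally show "prob_outcome (final_state (Kn dA d 2) U (alg dA d 2)) (\<lambda>x. \<not> ?c x = 2) = 1 - (t1 dA d U)^2"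
    using mom by simp
qed

lemma cheb:
  fixes n :: nat and \<epsilon> r :: real
  assumes n: "n > 0" and e: "\<epsilon> > 0" and ne: "real n \<ge> 3 / \<epsilon>^2" and r: "t1 dA d U = (1 + r)/2"
  shows "prob_outcome (final_state (Kn dA d n) U (alg dA d n))
           (\<lambda>x. \<bar>(2 * real (cnt (PP dA d) (dA*d) n x) / real n - 1) - r\<bar> \<le> \<epsilon>) \<ge> 2/3"
proof -
  let ?A = "{..<dA*d*Kn dA d n}"
  let ?t = "t1 dA d U"
  let ?mu = "real n * ?t"
  let ?g = "\<lambda>x. \<bar>(2 * real (cnt (PP dA d) (dA*d) n x) / real n - 1) - r\<bar> \<le> \<epsilon>"
  let ?ct = "ct dA d n"
  define q where "q = 4 / (real n^2 * \<epsilon>^2)"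
  have q0: "q > 0" using n e by (simp add: q_def)
  have bad: "(if ?g x then 0 else aa n x) \<le> aa n x * (q * (?ct x - ?mu)^2)" for x
  proof (cases "?g x")
    case True thus ?thesis using q0 by simp
  next
    case False
    have rr: "r = 2 * ?t - 1" using r by simp
    have "(2 * ?ct x / real n - 1) - r = 2 * (?ct x - ?mu) / real n"
      using n by (simp add: rr field_simps ct_def[OF dA d U])
    hence "\<bar>2 * (?ct x - ?mu) / real n\<bar> > \<epsilon>" using False by (simp add: ct_def[OF dA d U])
    moreover have "\<bar>2 * (?ct x - ?mu) / real n\<bar> = 2 * \<bar>?ct x - ?mu\<bar> / real n" by (simp only: abs_divide abs_mult abs_of_nat abs_numeral)
    ultimately have "\<epsilon> < 2 * \<bar>?ct x - ?mu\<bar> / real n" by metis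
    hence "\<epsilon> * real n < 2 * \<bar>?ct x - ?mu\<bar>" using n by (simp add: pos_less_divide_eq)
    hence "\<bar>?ct x - ?mu\<bar> > \<epsilon> * real n / 2" by simp
    hence "(?ct x - ?mu)^2 > (\<epsilon> * real n / 2)^2"
      using e n by (metis abs_ge_zero abs_of_pos power2_abs power_strict_mono zero_less_divide_iff zero_less_mult_iff of_nat_0_less_iff zero_less_numeral pos2)
    hence "q * (?ct x - ?mu)^2 > q * (\<epsilon> * real n / 2)^2" using q0 by simp
    moreover have "q * (\<epsilon> * real n / 2)^2 = 1" using n e by (simp add: q_def field_simps power2_eq_square)
    ultimately have "q * (?ct x - ?mu)^2 \<ge> 1" by simp
    hence "aa n x * 1 \<le> aa n x * (q * (?ct x - ?mu)^2)" by (intro mult_left_mono) auto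
    thus ?thesis using False by simp
  qed
  have "(\<Sum>x\<in>?A. if ?g x then 0 else aa n x) \<le> (\<Sum>x\<in>?A. aa n x * (q * (?ct x - ?mu)^2))"
    by (rule sum_mono) (rule bad)
  also have "\<dots> = q * (M dA d U 2 n - 2 * ?mu * M dA d U 1 n + ?mu^2 * M dA d U 0 n)"
    unfolding M_eq by (simp add: power2_diff sum_distrib_left sum_subtractf sum.distrib algebra_simps)
  also have "\<dots> = q * (real n * ?t * (1 - ?t))"
    unfolding mom by (simp add: algebra_simps power2_eq_square)
  also have "\<dots> \<le> q * (real n / 4)"
  proof -
    have "1/4 - ?t * (1 - ?t) = (?t - 1/2)^2" by (simp add: power2_eq_square algebra_simps)
    hence "?t * (1 - ?t) \<le> 1/4" by (metis diff_ge_0_iff_ge zero_le_power2)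
    hence "real n * (?t * (1 - ?t)) \<le> real n * (1/4)" by (intro mult_left_mono) auto
    thus ?thesis using q0 by (intro mult_left_mono) (auto simp: mult.assoc)
  qed
  also have "\<dots> = 1 / (real n * \<epsilon>^2)" using n by (simp add: q_def field_simps power2_eq_square)
  also have "\<dots> \<le> 1/3"
  proof -
    have "3 / \<epsilon>^2 * \<epsilon>^2 \<le> real n * \<epsilon>^2" using ne e by (intro mult_right_mono) auto
    hence "3 \<le> real n * \<epsilon>^2" using e by simp
    thus ?thesis using n e by (simp add: field_simps)
  qed
  finally have B: "(\<Sum>x\<in>?A. if ?g x then 0 else aa n x) \<le> 1/3" .
  have "prob_outcome (final_state (Kn dA d n) U (alg dA d n)) ?g = (\<Sum>x\<in>?A. aa n x) - (\<Sum>x\<in>?A. if ?g x then 0 else aa n x)"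
    unfolding prob_fs by (simp add: sum_subtractf[symmetric]) (intro sum.cong refl, simp)
  also have "(\<Sum>x\<in>?A. aa n x) = 1" using mom(1) unfolding M_eq by simp
  finally show ?thesis using B by simp
qed

end


theorem lemma3p2:
  shows "(\<forall>dA d. \<exists>K steps (out :: nat \<Rightarrow> bool).
            valid_alg dA d K steps \<and> num_U_queries steps = 2 \<and> num_Uconj_queries steps = 2 \<and>
            (\<forall>U \<psi>. is_unit_vec d \<psi> \<longrightarrow> state_prep dA d U (outer \<psi>) \<longrightarrow>
               (realness \<psi> = 1 \<longrightarrow> prob_outcome (final_state K U steps) out \<ge> 2/3) \<and>
               (realness \<psi> < 1/10 \<longrightarrow>
                  prob_outcome (final_state K U steps) (\<lambda>x. \<not> out x) \<ge> 2/3)))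
       \<and> (\<exists>C::real. C > 0 \<and> (\<forall>\<epsilon>::real. \<epsilon> > 0 \<longrightarrow> (\<forall>dA d. \<exists>K steps (est :: nat \<Rightarrow> real).
            valid_alg dA d K steps \<and>
            real (num_U_queries steps + num_Uconj_queries steps) \<le> C / \<epsilon>\<^sup>2 \<and>
            (\<forall>U \<psi>. is_unit_vec d \<psi> \<longrightarrow> state_prep dA d U (outer \<psi>) \<longrightarrow>
               prob_outcome (final_state K U steps) (\<lambda>x. \<bar>est x - realness \<psi>\<bar> \<le> \<epsilon>) \<ge> 2/3))))"
proof (intro conjI)
  show "\<forall>dA d. \<exists>K steps (out :: nat \<Rightarrow> bool).
            valid_alg dA d K steps \<and> num_U_queries steps = 2 \<and> num_Uconj_queries steps = 2 \<and>
            (\<forall>U \<psi>. is_unit_vec d \<psi> \<longrightarrow> state_prep dA d U (outer \<psi>) \<longrightarrow>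
               (realness \<psi> = 1 \<longrightarrow> prob_outcome (final_state K U steps) out \<ge> 2/3) \<and>
               (realness \<psi> < 1/10 \<longrightarrow>
                  prob_outcome (final_state K U steps) (\<lambda>x. \<not> out x) \<ge> 2/3))"
  proof (intro allI)
    fix dA d :: nat
    show "\<exists>K steps (out :: nat \<Rightarrow> bool).
            valid_alg dA d K steps \<and> num_U_queries steps = 2 \<and> num_Uconj_queries steps = 2 \<and>
            (\<forall>U \<psi>. is_unit_vec d \<psi> \<longrightarrow> state_prep dA d U (outer \<psi>) \<longrightarrow>
               (realness \<psi> = 1 \<longrightarrow> prob_outcome (final_state K U steps) out \<ge> 2/3) \<and>
               (realness \<psi> < 1/10 \<longrightarrow>
                  prob_outcome (final_state K U steps) (\<lambda>x. \<not> out x) \<ge> 2/3))"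
    proof (cases "dA > 0 \<and> d > 0")
      case True
      hence dA: "dA > 0" and d: "d > 0" by auto
      show ?thesis
      proof (intro exI[of _ "Kn dA d 2"] exI[of _ "alg dA d 2"] exI[of _ "\<lambda>x. cnt (PP dA d) (dA*d) 2 x = 2"] conjI allI impI)
        show "valid_alg dA d (Kn dA d 2) (alg dA d 2)" by (rule alg_valid[OF dA d])
        show "num_U_queries (alg dA d 2) = 2" "num_Uconj_queries (alg dA d 2) = 2"
          using alg_counts[OF dA d, of 2] by auto
      next
        fix U \<psi> assume u: "is_unit_vec d \<psi>" and sp: "state_prep dA d U (outer \<psi>)"
        note st = stats[OF u sp]
        note p = part1[OF dA d st(3) st(4)]
        have r0: "realness \<psi> \<ge> 0" by (rule realness_nonneg)
        {
          assume "realness \<psi> = 1"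
          hence "t1 dA d U = 1" using st(5) by simp
          thus "prob_outcome (final_state (Kn dA d 2) U (alg dA d 2)) (\<lambda>x. cnt (PP dA d) (dA*d) 2 x = 2) \<ge> 2/3"
            using p(1) by simp
        }
        {
          assume r: "realness \<psi> < 1/10"
          have t: "t1 dA d U < 11/20" "t1 dA d U \<ge> 0" using st(5) r r0 by auto
          have "(t1 dA d U)^2 \<le> (11/20)^2" using t by (intro power_mono) auto
          hence "(t1 dA d U)^2 \<le> 121/400" by (simp add: power_divide)
          thus "prob_outcome (final_state (Kn dA d 2) U (alg dA d 2)) (\<lambda>x. \<not> cnt (PP dA d) (dA*d) 2 x = 2) \<ge> 2/3"
            unfolding p(2) by linarith
        }
      qed
    next
      case False
      show ?thesis
      proof (intro exI[of _ "1::nat"] exI[of _ "[QueryU, QueryU, QueryUconj, QueryUconj]"] exI[of _ "\<lambda>x::nat. True"] conjI allI impI)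
        show "valid_alg dA d 1 [QueryU, QueryU, QueryUconj, QueryUconj]" by (simp add: valid_alg_def)
        show "num_U_queries [QueryU, QueryU, QueryUconj, QueryUconj] = 2"
          "num_Uconj_queries [QueryU, QueryU, QueryUconj, QueryUconj] = 2"
          by (simp_all add: num_U_queries_def num_Uconj_queries_def)
      next
        fix U \<psi> assume u: "is_unit_vec d \<psi>" and sp: "state_prep dA d U (outer \<psi>)"
        hence False using pos_dims[OF u sp] False by auto
        thus "realness \<psi> = 1 \<Longrightarrow> 2/3 \<le> prob_outcome (final_state 1 U [QueryU, QueryU, QueryUconj, QueryUconj]) (\<lambda>x. True)" by simp
        show "realness \<psi> < 1/10 \<Longrightarrow> 2/3 \<le> prob_outcome (final_state 1 U [QueryU, QueryU, QueryUconj, QueryUconj]) (\<lambda>x. \<not> True)"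
          using \<open>False\<close> by simp
      qed
    qed
  qed
next
  show "\<exists>C::real. C > 0 \<and> (\<forall>\<epsilon>::real. \<epsilon> > 0 \<longrightarrow> (\<forall>dA d. \<exists>K steps (est :: nat \<Rightarrow> real).
            valid_alg dA d K steps \<and>
            real (num_U_queries steps + num_Uconj_queries steps) \<le> C / \<epsilon>\<^sup>2 \<and>
            (\<forall>U \<psi>. is_unit_vec d \<psi> \<longrightarrow> state_prep dA d U (outer \<psi>) \<longrightarrow>
               prob_outcome (final_state K U steps) (\<lambda>x. \<bar>est x - realness \<psi>\<bar> \<le> \<epsilon>) \<ge> 2/3)))"
  proof (intro exI[of _ "8::real"] conjI allI impI)
    fix \<epsilon> :: real and dA d :: nat
    assume e: "\<epsilon> > 0"
    show "\<exists>K steps (est :: nat \<Rightarrow> real).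
            valid_alg dA d K steps \<and>
            real (num_U_queries steps + num_Uconj_queries steps) \<le> 8 / \<epsilon>\<^sup>2 \<and>
            (\<forall>U \<psi>. is_unit_vec d \<psi> \<longrightarrow> state_prep dA d U (outer \<psi>) \<longrightarrow>
               prob_outcome (final_state K U steps) (\<lambda>x. \<bar>est x - realness \<psi>\<bar> \<le> \<epsilon>) \<ge> 2/3)"
    proof (cases "dA > 0 \<and> d > 0 \<and> \<epsilon> < 1")
      case True
      hence dA: "dA > 0" and d: "d > 0" and e1: "\<epsilon> < 1" by auto
      define n where "n = nat \<lceil>3 / \<epsilon>^2\<rceil>"
      have e2: "\<epsilon>^2 > 0" using e by simp
      have "0 < 3 / \<epsilon>^2" using e2 by simp
      hence c0: "0 \<le> \<lceil>3 / \<epsilon>^2\<rceil>" by linarith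
      have rn: "real n = of_int \<lceil>3 / \<epsilon>^2\<rceil>" unfolding n_def using c0 by simp
      have ge: "real n \<ge> 3 / \<epsilon>^2" unfolding rn by (rule le_of_int_ceiling)
      have le: "real n \<le> 3 / \<epsilon>^2 + 1" unfolding rn by (rule of_int_ceiling_le_add_one)
      have n0: "n > 0" using ge e2 by (metis of_nat_0_less_iff order_less_le_trans zero_less_divide_iff zero_less_numeral)
      have inv: "1 \<le> 1 / \<epsilon>^2" using e e1 by (simp add: power_le_one field_simps)
      show ?thesis
      proof (intro exI[of _ "Kn dA d n"] exI[of _ "alg dA d n"] exI[of _ "\<lambda>x. 2 * real (cnt (PP dA d) (dA*d) n x) / real n - 1"] conjI allI impI)
        show "valid_alg dA d (Kn dA d n) (alg dA d n)" by (rule alg_valid[OF dA d])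
        have "real (num_U_queries (alg dA d n) + num_Uconj_queries (alg dA d n)) = 2 * real n"
          using alg_counts[OF dA d, of n] by simp
        also have "\<dots> \<le> 2 * (3 / \<epsilon>^2 + 1)" using le by simp
        also have "\<dots> \<le> 8 / \<epsilon>^2" using inv by (simp add: field_simps)
        finally show "real (num_U_queries (alg dA d n) + num_Uconj_queries (alg dA d n)) \<le> 8 / \<epsilon>^2" .
      next
        fix U \<psi> assume u: "is_unit_vec d \<psi>" and sp: "state_prep dA d U (outer \<psi>)"
        note st = stats[OF u sp]
        show "prob_outcome (final_state (Kn dA d n) U (alg dA d n))
               (\<lambda>x. \<bar>(2 * real (cnt (PP dA d) (dA*d) n x) / real n - 1) - realness \<psi>\<bar> \<le> \<epsilon>) \<ge> 2/3"
          by (rule cheb[OF dA d st(3) st(4) n0 e ge st(5)])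
      qed
    next
      case False
      show ?thesis
      proof (intro exI[of _ "Kn dA d 0"] exI[of _ "alg dA d 0"] exI[of _ "\<lambda>x::nat. 1/2::real"] conjI allI impI)
        show "valid_alg dA d (Kn dA d 0) (alg dA d 0)" by (simp add: valid_alg_def)
        show "real (num_U_queries (alg dA d 0) + num_Uconj_queries (alg dA d 0)) \<le> 8 / \<epsilon>^2"
          using e by (simp add: num_U_queries_def num_Uconj_queries_def)
      next
        fix U \<psi> assume u: "is_unit_vec d \<psi>" and sp: "state_prep dA d U (outer \<psi>)"
        note st = stats[OF u sp]
        have e1: "\<epsilon> \<ge> 1" using False st(1,2) by auto
        have r0: "realness \<psi> \<ge> 0" by (rule realness_nonneg)
        have r1: "realness \<psi> \<le> 1" using st(5) st(6) by simp
        have c: "\<bar>1/2 - realness \<psi>\<bar> \<le> \<epsilon>" using r0 r1 e1 by auto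
        have "prob_outcome (final_state (Kn dA d 0) U (alg dA d 0)) (\<lambda>x. \<bar>1/2 - realness \<psi>\<bar> \<le> \<epsilon>)
              = M dA d U 0 0"
          unfolding prob_fs[OF st(1,2,3,4)] M_eq[OF st(1,2,3,4)] using c by simp
        also have "\<dots> = 1" using mom[OF st(1,2,3,4)] by simp
        finally show "prob_outcome (final_state (Kn dA d 0) U (alg dA d 0)) (\<lambda>x. \<bar>1/2 - realness \<psi>\<bar> \<le> \<epsilon>) \<ge> 2/3" by simp
      qed
    qed
  qed simp
qed


end
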